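(* Let $M$ be any finite message set containing distinct messages $m_L,m_R$. Then $\sigma_L$ and $\sigma_R$ are neutrally stable strategies of $\langle\Gamma,M\rangle$. Moreover, if $M=\{m_L,m_R\}$, then $\sigma_L$ and $\sigma_R$ are evolutionarily stable strategies.
   Context: Game $\langle\Gamma,M\rangle$: two players; types drawn independently from a distribution on $U=[0,1]$ with continuous CDF $F$ and density $f>0$ on $[0,1]$. Each chooses $L$ or $R$; a player of type $u$ gets $1-u$ if both choose $L$, $u$ if both choose $R$, and $0$ otherwise. After learning types, players simultaneously send publicly observed costless messages from $M$. A strategy is $\sigma=(\mu,\xi)$ with $\mu:U\to\Delta(M)$ measurable ($\mu_u(m)$ = probability type $u$ sends $m$) and $\xi:M\times M\to[0,1]$: a player who sent $m$ and observes $m'$ plays $L$ iff her type $u\le\xi(m,m')$. $\Sigma$ is the set of strategies. $\bar\mu(m)=\int_0^1\mu_u(m)f(u)du$, $\mathrm{supp}(\bar\mu)=\{m:\bar\mu(m)>0\}$. For $m\in\mathrm{supp}(\bar\mu)$, $F_m$ is the CDF with density $f(u)\mu_u(m)/\bar\mu(m)$. Payoffs: $\pi_{u,v}(\sigma,\sigma')=\sum_{m,m'}\mu_u(m)\mu'_v(m')[(1-u)\mathbf 1\{u\le\xi(m,m')\}\mathbf 1\{v\le\xi'(m',m)\}+u\mathbf 1\{u>\xi(m,m')\}\mathbf 1\{v>\xi'(m',m)\}]$, $\pi_u(\sigma,\sigma')=\int_0^1\pi_{u,v}f(v)dv$, $\pi(\sigma,\sigma')=\int_0^1\pi_u(\sigma,\sigma')f(u)du$.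 $\sigma\in\mathcal E$ (equilibrium) if $\pi_u(\sigma,\sigma)\ge\pi_u(\sigma',\sigma)$ for all $u,\sigma'$. $\sigma=(\mu,\xi)$ and $\tilde\sigma=(\tilde\mu,\tilde\xi)$ are equivalent ($\sigma\approx\tilde\sigma$) if for almost all types $u$ (w.r.t. $f$), $\mu_u(m)=\tilde\mu_u(m)$ for all $m\in M$, and $F_m(\xi(m,m'))=F_m(\tilde\xi(m,m'))$ for all $m,m'\in\mathrm{supp}(\bar\mu)$. An equilibrium strategy $\sigma$ is neutrally stable if for every $\tilde\sigma\not\approx\sigma$, $\pi(\tilde\sigma,\sigma)=\pi(\sigma,\sigma)$ implies $\pi(\sigma,\tilde\sigma)\ge\pi(\tilde\sigma,\tilde\sigma)$; it is evolutionarily stable if moreover the last inequality is strict. $\mu^*(u)=m_L$ if $u\le1/2$, $m_R$ if $u>1/2$ (with probability one). $\xi_L(m,m')=0$ if $m=m'=m_R$ and $1$ otherwise; $\xi_R(m,m')=1$ if $m=m'=m_L$ and $0$ otherwise. $\sigma_L=(\mu^*,\xi_L)$, $\sigma_R=(\mu^*,\xi_R)$. *)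

theory Defs
  imports "HOL-Analysis.Analysis"
begin

text \<open>A strategy is a pair (mu, xi): mu u m is the probability that type u sends
message m; xi m m' is the threshold (play L iff type \<le> xi m m').\<close>

type_synonym 'm strat = "(real \<Rightarrow> 'm \<Rightarrow> real) \<times> ('m \<Rightarrow> 'm \<Rightarrow> real)"

definition is_strategy :: "('m::finite) strat \<Rightarrow> bool" where
  "is_strategy \<sigma> \<longleftrightarrow>
     (\<forall>u\<in>{0..1}. (\<forall>m. fst \<sigma> u m \<ge> 0) \<and> (\<Sum>m\<in>UNIV. fst \<sigma> u m) = 1) \<and>
     (\<forall>m. set_borel_measurable lborel {0..1} (\<lambda>u. fst \<sigma> u m)) \<and>
     (\<forall>m m'. snd \<sigma> m m' \<in> {0..1})"

definition payoff_uv :: "('m::finite) strat \<Rightarrow> 'm strat \<Rightarrow> real \<Rightarrow> real \<Rightarrow> real" where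
  "payoff_uv \<sigma> \<sigma>' u v =
     (\<Sum>m\<in>UNIV. \<Sum>m'\<in>UNIV. fst \<sigma> u m * fst \<sigma>' v m' *
        ((1 - u) * of_bool (u \<le> snd \<sigma> m m') * of_bool (v \<le> snd \<sigma>' m' m)
         + u * of_bool (u > snd \<sigma> m m') * of_bool (v > snd \<sigma>' m' m)))"

definition payoff_u :: "(real \<Rightarrow> real) \<Rightarrow> ('m::finite) strat \<Rightarrow> 'm strat \<Rightarrow> real \<Rightarrow> real" where
  "payoff_u f \<sigma> \<sigma>' u = (LINT v:{0..1}|lborel. payoff_uv \<sigma> \<sigma>' u v * f v)"

definition payoff :: "(real \<Rightarrow> real) \<Rightarrow> ('m::finite) strat \<Rightarrow> 'm strat \<Rightarrow> real" where
  "payoff f \<sigma> \<sigma>' = (LINT u:{0..1}|lborel. payoff_u f \<sigma> \<sigma>' u * f u)"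

definition equilibrium :: "(real \<Rightarrow> real) \<Rightarrow> ('m::finite) strat \<Rightarrow> bool" where
  "equilibrium f \<sigma> \<longleftrightarrow> is_strategy \<sigma> \<and>
     (\<forall>u\<in>{0..1}. \<forall>\<sigma>'. is_strategy \<sigma>' \<longrightarrow> payoff_u f \<sigma>' \<sigma> u \<le> payoff_u f \<sigma> \<sigma> u)"

definition mubar :: "(real \<Rightarrow> real) \<Rightarrow> (real \<Rightarrow> 'm \<Rightarrow> real) \<Rightarrow> 'm \<Rightarrow> real" where
  "mubar f \<mu> m = (LINT u:{0..1}|lborel. \<mu> u m * f u)"

definition msupp :: "(real \<Rightarrow> real) \<Rightarrow> (real \<Rightarrow> 'm \<Rightarrow> real) \<Rightarrow> 'm set" where
  "msupp f \<mu> = {m. mubar f \<mu> m > 0}"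

definition Fm :: "(real \<Rightarrow> real) \<Rightarrow> (real \<Rightarrow> 'm \<Rightarrow> real) \<Rightarrow> 'm \<Rightarrow> real \<Rightarrow> real" where
  "Fm f \<mu> m x = (LINT u:{0..x}|lborel. f u * \<mu> u m) / mubar f \<mu> m"

definition strat_equiv :: "(real \<Rightarrow> real) \<Rightarrow> ('m::finite) strat \<Rightarrow> 'm strat \<Rightarrow> bool" where
  "strat_equiv f \<sigma> \<tau> \<longleftrightarrow>
     (AE u in density lborel (\<lambda>u. ennreal (f u * indicator {0..1} u)).
        \<forall>m. fst \<sigma> u m = fst \<tau> u m) \<and>
     (\<forall>m\<in>msupp f (fst \<sigma>). \<forall>m'\<in>msupp f (fst \<sigma>).
        Fm f (fst \<sigma>) m (snd \<sigma> m m') = Fm f (fst \<sigma>) m (snd \<tau> m m'))"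

definition neutrally_stable :: "(real \<Rightarrow> real) \<Rightarrow> ('m::finite) strat \<Rightarrow> bool" where
  "neutrally_stable f \<sigma> \<longleftrightarrow> equilibrium f \<sigma> \<and>
     (\<forall>\<tau>. is_strategy \<tau> \<and> \<not> strat_equiv f \<tau> \<sigma> \<and> payoff f \<tau> \<sigma> = payoff f \<sigma> \<sigma>
        \<longrightarrow> payoff f \<sigma> \<tau> \<ge> payoff f \<tau> \<tau>)"

definition evolutionarily_stable :: "(real \<Rightarrow> real) \<Rightarrow> ('m::finite) strat \<Rightarrow> bool" where
  "evolutionarily_stable f \<sigma> \<longleftrightarrow> equilibrium f \<sigma> \<and>
     (\<forall>\<tau>. is_strategy \<tau> \<and> \<not> strat_equiv f \<tau> \<sigma> \<and> payoff f \<tau> \<sigma> = payoff f \<sigma> \<sigma>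
        \<longrightarrow> payoff f \<sigma> \<tau> > payoff f \<tau> \<tau>)"

definition mu_star :: "'m \<Rightarrow> 'm \<Rightarrow> real \<Rightarrow> 'm \<Rightarrow> real" where
  "mu_star mL mR u m = (if m = (if u \<le> 1/2 then mL else mR) then 1 else 0)"

definition xi_L :: "'m \<Rightarrow> 'm \<Rightarrow> 'm \<Rightarrow> real" where
  "xi_L mR m m' = (if m = mR \<and> m' = mR then 0 else 1)"

definition xi_R :: "'m \<Rightarrow> 'm \<Rightarrow> 'm \<Rightarrow> real" where
  "xi_R mL m m' = (if m = mL \<and> m' = mL then 1 else 0)"

definition sigma_L :: "'m \<Rightarrow> 'm \<Rightarrow> 'm strat" where
  "sigma_L mL mR = (mu_star mL mR, xi_L mR)"

definition sigma_R :: "'m \<Rightarrow> 'm \<Rightarrow> 'm strat" where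
  "sigma_R mL mR = (mu_star mL mR, xi_R mL)"

end

theory Submission
  imports Defs
begin


lemma ex_point:
  assumes "AE x in lborel. P x" "(l::real) < r"
  shows "\<exists>x. l < x \<and> x < r \<and> P x"
proof (rule ccontr)
  assume H: "\<not> ?thesis"
  from assms(1) obtain N where N: "{x \<in> space lborel. \<not> P x} \<subseteq> N" "emeasure lborel N = 0" "N \<in> sets lborel"
    by (auto elim!: AE_E)
  have "{l<..<r} \<subseteq> N" using H N(1) by auto
  hence "emeasure lborel {l<..<r} \<le> emeasure lborel N" using N(3) by (intro emeasure_mono) auto
  with N(2) assms(2) show False by simp
qed

lemma sum_nonneg_zeroD:
  fixes g :: "'a \<Rightarrow> real"
  assumes "finite A" "\<And>x. x \<in> A \<Longrightarrow> 0 \<le> g x" "sum g A = 0" "x \<in> A"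
  shows "g x = 0"
  using sum_nonneg_eq_0_iff[OF assms(1)] assms by auto

locale G =
  fixes f :: "real \<Rightarrow> real" and mL mR :: "'m::finite"
  assumes ne: "mL \<noteq> mR"
    and fint: "set_integrable lborel {0..1} f"
    and fpos: "\<forall>u\<in>{0..1}. f u > 0"
    and f1: "(LINT u:{0..1}|lborel. f u) = 1"
begin

definition "a = (LINT v:{0..1/2}|lborel. f v)"
definition "b = (LINT v:{1/2<..1}|lborel. f v)"

lemma fint': "integrable lborel (\<lambda>v. indicator {0..1} v * f v)"
  using fint by (simp add: set_integrable_def)

lemma fmeas[measurable]: "(\<lambda>v. indicator {0..1} v * f v) \<in> borel_measurable lborel"
  using fint' by (rule borel_measurable_integrable)

lemma fsub: "A \<in> sets lborel \<Longrightarrow> A \<subseteq> {0..1} \<Longrightarrow> integrable lborel (\<lambda>v. indicator A v * f v)"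
  using set_integrable_subset[OF fint] by (simp add: set_integrable_def)

lemma ab: "a + b = 1"
proof -
  have "(LINT v:{0..1/2} \<union> {1/2<..1}|lborel. f v) = a + b"
    unfolding a_def b_def
    by (rule set_integral_Un) (auto intro!: set_integrable_subset[OF fint])
  moreover have "{0..1/2} \<union> {1/2<..1} = {0..(1::real)}" by auto
  ultimately show ?thesis using f1 by simp
qed

lemma pos_int:
  assumes "0 \<le> l" "l < r" "r \<le> 1" "{l<..<r} \<subseteq> A" "A \<subseteq> {0..1}" "A \<in> sets lborel"
  shows "(LINT v:A|lborel. f v) > 0"
proof -
  have I: "integrable lborel (\<lambda>v. indicator A v * f v)" using fsub assms by auto
  have nn: "AE v in lborel. 0 \<le> indicator A v * f v"
  proof (rule AE_I2)
    fix v show "0 \<le> indicator A v * f v"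
      using assms(5) fpos by (cases "v \<in> A") (auto simp: less_imp_le)
  qed
  have "integral\<^sup>L lborel (\<lambda>v. indicator A v * f v) \<ge> 0" by (rule integral_nonneg_AE[OF nn])
  hence ge: "(LINT v:A|lborel. f v) \<ge> 0" by (simp add: set_lebesgue_integral_def)
  have "(LINT v:A|lborel. f v) \<noteq> 0"
  proof
    assume "(LINT v:A|lborel. f v) = 0"
    hence "AE v in lborel. indicator A v * f v = 0"
      using integral_nonneg_eq_0_iff_AE[OF I nn] by (simp add: set_lebesgue_integral_def)
    then obtain x where x: "l < x" "x < r" "indicator A x * f x = 0"
      using ex_point assms(2) by blast
    have "x \<in> A" using x assms(4) by auto
    moreover have "f x > 0" using fpos assms(5) \<open>x \<in> A\<close> by auto
    ultimately show False using x(3) by simp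
  qed
  with ge show ?thesis by simp
qed

lemma a_pos: "a > 0" unfolding a_def by (rule pos_int[of 0 "1/2"]) auto
lemma b_pos: "b > 0" unfolding b_def by (rule pos_int[of "1/2" 1]) auto

lemma piecewise:
  assumes "(\<lambda>v. indicator {0..1} v * g v) \<in> borel_measurable lborel"
    and "AE v in lborel. v \<in> {0..1} \<longrightarrow> g v = (if v \<le> 1/2 then P else Q)"
  shows "(LINT v:{0..1}|lborel. g v * f v) = P * a + Q * b"
proof -
  have e1: "(\<lambda>v. indicator {0..1} v * (g v * f v)) = (\<lambda>v. (indicator {0..1} v * g v) * (indicator {0..1} v * f v))"
    by (auto simp: indicator_def)
  have m1: "(\<lambda>v. indicator {0..1} v * (g v * f v)) \<in> borel_measurable lborel"
    unfolding e1 using assms(1) by measurable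
  have e2: "\<And>v. indicator {0..1} v * ((if v \<le> 1/2 then P else Q) * f v)
      = P * (indicator {0..1/2} v * f v) + Q * (indicator {1/2<..1} v * f v)"
    by (auto simp: indicator_def)
  have m2: "(\<lambda>v. P * (indicator {0..1/2} v * f v) + Q * (indicator {1/2<..1} v * f v)) \<in> borel_measurable lborel"
  proof -
    have [measurable]: "(\<lambda>v. indicator {0..1/2} v * f v) \<in> borel_measurable lborel"
      by (rule borel_measurable_integrable[OF fsub]) auto
    have [measurable]: "(\<lambda>v. indicator {1/2<..1} v * f v) \<in> borel_measurable lborel"
      by (rule borel_measurable_integrable[OF fsub]) auto
    show ?thesis by measurable
  qed
  have "(LINT v:{0..1}|lborel. g v * f v) = integral\<^sup>L lborel (\<lambda>v. P * (indicator {0..1/2} v * f v) + Q * (indicator {1/2<..1} v * f v))"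
    unfolding set_lebesgue_integral_def
  proof (rule integral_cong_AE)
    show "AE v in lborel. indicator {0..1} v *\<^sub>R (g v * f v) =
      P * (indicator {0..1/2} v * f v) + Q * (indicator {1/2<..1} v * f v)"
    proof (rule AE_mp[OF assms(2)], rule AE_I2, rule impI)
      fix v assume h: "v \<in> {0..1} \<longrightarrow> g v = (if v \<le> 1/2 then P else Q)"
      show "indicator {0..1} v *\<^sub>R (g v * f v) =
        P * (indicator {0..1/2} v * f v) + Q * (indicator {1/2<..1} v * f v)"
      proof (cases "v \<in> {0..1}")
        case True thus ?thesis using h e2[of v] by simp
      next
        case False thus ?thesis by (auto simp: indicator_def)
      qed
    qed
  qed (use m1 m2 in auto)
  also have "\<dots> = P * a + Q * b"
  proof -
    have i1: "integrable lborel (\<lambda>v. indicator {0..1/2} v * f v)" by (rule fsub) auto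
    have i2: "integrable lborel (\<lambda>v. indicator {1/2<..1} v * f v)" by (rule fsub) auto
    have "integral\<^sup>L lborel (\<lambda>v. P * (indicator {0..1/2} v * f v) + Q * (indicator {1/2<..1} v * f v))
      = integral\<^sup>L lborel (\<lambda>v. P * (indicator {0..1/2} v * f v)) + integral\<^sup>L lborel (\<lambda>v. Q * (indicator {1/2<..1} v * f v))"
      by (rule Bochner_Integration.integral_add) (use i1 i2 in auto)
    thus ?thesis by (simp add: a_def b_def set_lebesgue_integral_def)
  qed
  finally show ?thesis .
qed

lemma bounded_int:
  assumes "(\<lambda>u. indicator {0..1} u * g u) \<in> borel_measurable lborel"
    and "\<And>u. u \<in> {0..1} \<Longrightarrow> \<bar>g u\<bar> \<le> 1"
  shows "integrable lborel (\<lambda>u. indicator {0..1} u * (g u * f u))"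
proof (rule Bochner_Integration.integrable_bound[OF fint'])
  have e1: "(\<lambda>v. indicator {0..1} v * (g v * f v)) = (\<lambda>v. (indicator {0..1} v * g v) * (indicator {0..1} v * f v))"
    by (auto simp: indicator_def)
  show "(\<lambda>u. indicator {0..1} u * (g u * f u)) \<in> borel_measurable lborel"
    unfolding e1 using assms(1) by measurable
  show "AE x in lborel. norm (indicator {0..1} x * (g x * f x)) \<le> norm (indicator {0..1} x * f x)"
  proof (rule AE_I2)
    fix x show "norm (indicator {0..1} x * (g x * f x)) \<le> norm (indicator {0..1} x * f x)"
    proof (cases "x \<in> {0..1}")
      case True
      hence "\<bar>g x\<bar> * \<bar>f x\<bar> \<le> 1 * \<bar>f x\<bar>" using assms(2) by (intro mult_right_mono) auto
      thus ?thesis using True by (simp add: abs_mult)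
    qed simp
  qed
qed

end


lemma sd1: "(\<Sum>m'\<in>(UNIV::'m::finite set). x * (if m' = c then 1 else 0) * Y m') = x * (Y c :: real)"
proof -
  have "(\<Sum>m'\<in>(UNIV::'m set). x * (if m' = c then 1 else 0) * Y m') = (\<Sum>m'\<in>UNIV. if m' = c then x * Y m' else 0)"
    by (intro sum.cong) auto
  thus ?thesis by simp
qed

lemma sd2: "(\<Sum>m\<in>(UNIV::'m::finite set). (if m = c then 1 else 0) * Y m) = (Y c :: real)"
proof -
  have "(\<Sum>m\<in>(UNIV::'m set). (if m = c then 1 else 0) * Y m) = (\<Sum>m\<in>UNIV. if m = c then Y m else 0)"
    by (intro sum.cong) auto
  thus ?thesis by simp
qed

lemma payoff_uv_delta2:
  assumes "\<And>m'. fst \<sigma>' v m' = (if m' = c then 1 else 0)"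
  shows "payoff_uv \<sigma> \<sigma>' u v = (\<Sum>m\<in>UNIV. fst \<sigma> u m *
     ((1 - u) * of_bool (u \<le> snd \<sigma> m c) * of_bool (v \<le> snd \<sigma>' c m)
      + u * of_bool (u > snd \<sigma> m c) * of_bool (v > snd \<sigma>' c m)))"
  unfolding payoff_uv_def assms by (simp only: sd1)

lemma payoff_uv_delta1:
  assumes "\<And>m. fst \<sigma> u m = (if m = c then 1 else 0)"
  shows "payoff_uv \<sigma> \<sigma>' u v = (\<Sum>m'\<in>UNIV. fst \<sigma>' v m' *
     ((1 - u) * of_bool (u \<le> snd \<sigma> c m') * of_bool (v \<le> snd \<sigma>' m' c)
      + u * of_bool (u > snd \<sigma> c m') * of_bool (v > snd \<sigma>' m' c)))"
proof -
  have "payoff_uv \<sigma> \<sigma>' u v = (\<Sum>m\<in>UNIV. (if m = c then 1 else 0) * (\<Sum>m'\<in>UNIV. fst \<sigma>' v m' *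
     ((1 - u) * of_bool (u \<le> snd \<sigma> m m') * of_bool (v \<le> snd \<sigma>' m' m)
      + u * of_bool (u > snd \<sigma> m m') * of_bool (v > snd \<sigma>' m' m))))"
    unfolding payoff_uv_def assms by (simp add: sum_distrib_left mult.assoc)
  thus ?thesis by (simp only: sd2)
qed

lemma conv_le:
  fixes p c :: "'m::finite \<Rightarrow> real"
  assumes "\<And>m. 0 \<le> p m" "(\<Sum>m\<in>UNIV. p m) = 1" "\<And>m. p m * c m \<le> p m * K"
  shows "(\<Sum>m\<in>UNIV. p m * c m) \<le> K"
proof -
  have "(\<Sum>m\<in>UNIV. p m * c m) \<le> (\<Sum>m\<in>UNIV. p m * K)" by (intro sum_mono assms(3))
  also have "\<dots> = K" using assms(2) by (simp add: sum_distrib_right[symmetric])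
  finally show ?thesis .
qed

lemma conv_ge:
  fixes p c :: "'m::finite \<Rightarrow> real"
  assumes "\<And>m. 0 \<le> p m" "(\<Sum>m\<in>UNIV. p m) = 1" "\<And>m. p m * K \<le> p m * c m"
  shows "K \<le> (\<Sum>m\<in>UNIV. p m * c m)"
proof -
  have "K = (\<Sum>m\<in>UNIV. p m * K)" using assms(2) by (simp add: sum_distrib_right[symmetric])
  also have "\<dots> \<le> (\<Sum>m\<in>UNIV. p m * c m)" by (intro sum_mono assms(3))
  finally show ?thesis .
qed

lemma conv_eqK:
  fixes p c :: "'m::finite \<Rightarrow> real"
  assumes "(\<Sum>m\<in>UNIV. p m) = 1" "\<And>m. p m * c m = p m * K"
  shows "(\<Sum>m\<in>UNIV. p m * c m) = K"
proof -
  have "(\<Sum>m\<in>UNIV. p m * c m) = (\<Sum>m\<in>UNIV. p m * K)" by (rule sum.cong[OF refl assms(2)])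
  also have "\<dots> = K" using assms(1) by (simp add: sum_distrib_right[symmetric])
  finally show ?thesis .
qed

lemma conv_eq:
  fixes p c :: "'m::finite \<Rightarrow> real"
  assumes "\<And>m. 0 \<le> p m" "(\<Sum>m\<in>UNIV. p m) = 1" "\<And>m. c m \<le> hi" "(\<Sum>m\<in>UNIV. p m * c m) = hi"
  shows "p m * (hi - c m) = 0"
proof -
  have "(\<Sum>m\<in>UNIV. p m * (hi - c m)) = hi * (\<Sum>m\<in>UNIV. p m) - (\<Sum>m\<in>UNIV. p m * c m)"
    by (simp add: algebra_simps sum_subtractf sum_distrib_left)
  hence "(\<Sum>m\<in>UNIV. p m * (hi - c m)) = 0" using assms(2,4) by simp
  moreover have "\<And>m. 0 \<le> p m * (hi - c m)" using assms(1,3) by simp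
  ultimately show ?thesis using sum_nonneg_zeroD[of UNIV "\<lambda>m. p m * (hi - c m)" m] by simp
qed

lemma st_nonneg: "is_strategy \<tau> \<Longrightarrow> u \<in> {0..1} \<Longrightarrow> 0 \<le> fst \<tau> u m"
  by (auto simp: is_strategy_def)
lemma st_sum: "is_strategy \<tau> \<Longrightarrow> u \<in> {0..1} \<Longrightarrow> (\<Sum>m\<in>UNIV. fst \<tau> u m) = 1"
  by (auto simp: is_strategy_def)
lemma st_meas: "is_strategy \<tau> \<Longrightarrow> (\<lambda>u. indicator {0..1} u * fst \<tau> u m) \<in> borel_measurable lborel"
  by (auto simp: is_strategy_def set_borel_measurable_def)
lemma st_xi: "is_strategy \<tau> \<Longrightarrow> snd \<tau> m m' \<in> {0..1}"
  by (auto simp: is_strategy_def)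

lemma meas_v:
  assumes "is_strategy \<tau>"
  shows "(\<lambda>v. indicator {0..1} v * payoff_uv \<sigma> \<tau> u v) \<in> borel_measurable lborel"
proof -
  define h where "h m v = indicator {0..1} v * fst \<tau> v m" for m v
  have [measurable]: "h m \<in> borel_measurable lborel" for m
    unfolding h_def using st_meas[OF assms] by simp
  have e: "(\<lambda>v. indicator {0..1} v * payoff_uv \<sigma> \<tau> u v) = (\<lambda>v. \<Sum>m\<in>UNIV. \<Sum>m'\<in>UNIV. fst \<sigma> u m * h m' v *
        ((1 - u) * of_bool (u \<le> snd \<sigma> m m') * of_bool (v \<le> snd \<tau> m' m)
         + u * of_bool (u > snd \<sigma> m m') * of_bool (v > snd \<tau> m' m)))"
    by (rule ext) (simp add: payoff_uv_def h_def sum_distrib_left mult_ac)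
  show ?thesis unfolding e by measurable
qed

lemma conv_meas:
  assumes "is_strategy \<tau>" "\<And>m. (c m :: real \<Rightarrow> real) \<in> borel_measurable lborel"
  shows "(\<lambda>u. indicator {0..1} u * (\<Sum>m\<in>UNIV. fst \<tau> u m * c m u)) \<in> borel_measurable lborel"
proof -
  define h where "h m v = indicator {0..1} v * fst \<tau> v m" for m v
  have [measurable]: "h m \<in> borel_measurable lborel" for m
    unfolding h_def using st_meas[OF assms(1)] by simp
  have [measurable]: "c m \<in> borel_measurable lborel" for m using assms(2) .
  have e: "(\<lambda>u. indicator {0..1} u * (\<Sum>m\<in>UNIV. fst \<tau> u m * c m u)) = (\<lambda>u. \<Sum>m\<in>UNIV. h m u * c m u)"
    by (rule ext) (simp add: h_def sum_distrib_left mult_ac)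
  show ?thesis unfolding e by measurable
qed



context G begin

abbreviation "sL \<equiv> sigma_L mL mR"

lemma fst_sL: "fst sL u m = (if m = (if u \<le> 1/2 then mL else mR) then 1 else 0)"
  by (simp add: sigma_L_def mu_star_def)
lemma fst_sL': "fst sL u m = (if u \<le> 1/2 then (if m = mL then 1 else 0) else (if m = mR then 1 else 0))"
  by (simp add: sigma_L_def mu_star_def)
lemma snd_sL: "snd sL m m' = (if m = mR \<and> m' = mR then 0 else 1)"
  by (simp add: sigma_L_def xi_L_def)

lemma strat_sL: "is_strategy sL"
proof -
  have "set_borel_measurable lborel {0..1} (\<lambda>u. fst sL u m)" for m
  proof -
    have e: "(\<lambda>u. indicator {0..1} u *\<^sub>R fst sL u m) = (\<lambda>u. indicator {0..1} u * (indicator {..1/2} u * (if m = mL then 1 else 0) + indicator {1/2<..} u * (if m = mR then 1 else 0)))"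
      by (rule ext) (simp add: fst_sL' indicator_def)
    show ?thesis unfolding set_borel_measurable_def e by (intro borel_measurable_times borel_measurable_add borel_measurable_indicator borel_measurable_const) auto
  qed
  moreover have "(\<Sum>m\<in>UNIV. fst sL u m) = 1" for u
    unfolding fst_sL by simp
  ultimately show ?thesis unfolding is_strategy_def by (auto simp: fst_sL snd_sL)
qed

definition "PL \<tau> u = (\<Sum>m\<in>UNIV. fst \<tau> u m * ((1-u) * of_bool (u \<le> snd \<tau> m mL)))"
definition "PH \<tau> u = (\<Sum>m\<in>UNIV. fst \<tau> u m *
   (if m = mR then u * of_bool (snd \<tau> m mR < u) else (1-u) * of_bool (u \<le> snd \<tau> m mR)))"
definition "BL u = (if u \<le> 1/2 then 1 - u else a * (1-u) + b * u)"

lemma BL_eq: "a * (1 - u) + b * (if u \<le> 1/2 then 1 - u else u) = BL u"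
proof -
  have "a * (1 - u) + b * (1 - u) = (a + b) * (1 - u)" by (simp add: algebra_simps)
  thus ?thesis unfolding BL_def using ab by auto
qed

lemma uvL: "v \<in> {0..1} \<Longrightarrow> payoff_uv \<tau> sL u v = (if v \<le> 1/2 then PL \<tau> u else PH \<tau> u)"
proof (cases "v \<le> 1/2")
  case True
  assume v: "v \<in> {0..1}"
  have "payoff_uv \<tau> sL u v = (\<Sum>m\<in>UNIV. fst \<tau> u m *
     ((1 - u) * of_bool (u \<le> snd \<tau> m mL) * of_bool (v \<le> snd sL mL m)
      + u * of_bool (u > snd \<tau> m mL) * of_bool (v > snd sL mL m)))"
    by (rule payoff_uv_delta2) (use True in \<open>simp add: fst_sL\<close>)
  also have "\<dots> = PL \<tau> u" unfolding PL_def using v ne by (simp add: snd_sL)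
  finally show ?thesis using True by simp
next
  case False
  assume v: "v \<in> {0..1}"
  have "payoff_uv \<tau> sL u v = (\<Sum>m\<in>UNIV. fst \<tau> u m *
     ((1 - u) * of_bool (u \<le> snd \<tau> m mR) * of_bool (v \<le> snd sL mR m)
      + u * of_bool (u > snd \<tau> m mR) * of_bool (v > snd sL mR m)))"
    by (rule payoff_uv_delta2) (use False in \<open>simp add: fst_sL\<close>)
  also have "\<dots> = PH \<tau> u" unfolding PH_def
  proof (intro sum.cong refl)
    fix m
    show "fst \<tau> u m * ((1 - u) * of_bool (u \<le> snd \<tau> m mR) * of_bool (v \<le> snd sL mR m)
      + u * of_bool (u > snd \<tau> m mR) * of_bool (v > snd sL mR m)) =
      fst \<tau> u m * (if m = mR then u * of_bool (snd \<tau> m mR < u) else (1-u) * of_bool (u \<le> snd \<tau> m mR))"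
      using v False by (cases "m = mR") (auto simp: snd_sL)
  qed
  finally show ?thesis using False by simp
qed

lemma pu_L: "is_strategy \<tau> \<Longrightarrow> payoff_u f \<tau> sL u = a * PL \<tau> u + b * PH \<tau> u"
proof -
  have m: "(\<lambda>v. indicator {0..1} v * payoff_uv \<tau> sL u v) \<in> borel_measurable lborel"
    by (rule meas_v[OF strat_sL])
  have "payoff_u f \<tau> sL u = PL \<tau> u * a + PH \<tau> u * b"
    unfolding payoff_u_def by (rule piecewise[OF m]) (intro AE_I2 impI uvL)
  thus ?thesis by simp
qed

lemma PL_bd: "is_strategy \<tau> \<Longrightarrow> u \<in> {0..1} \<Longrightarrow> 0 \<le> PL \<tau> u \<and> PL \<tau> u \<le> 1 - u"
  unfolding PL_def
  by (intro conjI conv_ge[where K=0] conv_le) (auto simp: st_nonneg st_sum mult_left_mono)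

lemma PH_bd: "is_strategy \<tau> \<Longrightarrow> u \<in> {0..1} \<Longrightarrow> 0 \<le> PH \<tau> u \<and> PH \<tau> u \<le> (if u \<le> 1/2 then 1 - u else u)"
  unfolding PH_def
  by (intro conjI conv_ge[where K=0] conv_le) (auto simp: st_nonneg st_sum mult_left_mono)

lemma pu_le: "is_strategy \<tau> \<Longrightarrow> u \<in> {0..1} \<Longrightarrow> payoff_u f \<tau> sL u \<le> BL u \<and> 0 \<le> payoff_u f \<tau> sL u"
proof -
  assume s: "is_strategy \<tau>" and u: "u \<in> {0..1}"
  have 1: "a * PL \<tau> u \<le> a * (1 - u)" using PL_bd[OF s u] a_pos by (intro mult_left_mono) auto
  have 2: "b * PH \<tau> u \<le> b * (if u \<le> 1/2 then 1 - u else u)" using PH_bd[OF s u] b_pos by (intro mult_left_mono) auto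
  have 3: "0 \<le> a * PL \<tau> u" "0 \<le> b * PH \<tau> u" using PL_bd[OF s u] PH_bd[OF s u] a_pos b_pos by auto
  note BL_eq[of u]
  thus ?thesis using 1 2 3 pu_L[OF s] by auto
qed

lemma pu_self: "u \<in> {0..1} \<Longrightarrow> payoff_u f sL sL u = BL u"
proof -
  assume u: "u \<in> {0..1}"
  have "PL sL u = 1 - u" unfolding PL_def using ne u by (simp add: snd_sL fst_sL sd2)
  moreover have "PH sL u = (if u \<le> 1/2 then 1 - u else u)" unfolding PH_def using ne u by (simp add: snd_sL fst_sL sd2)
  ultimately show ?thesis using pu_L[OF strat_sL] BL_eq[of u] by simp
qed

lemma equil_sL: "equilibrium f sL"
  unfolding equilibrium_def using strat_sL pu_le pu_self by auto

lemma BL_bd: "u \<in> {0..1} \<Longrightarrow> 0 \<le> BL u \<and> BL u \<le> 1"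
proof -
  assume u: "u \<in> {0..1}"
  have "a * (1-u) \<le> a * 1" "b * u \<le> b * 1" using u a_pos b_pos by (intro mult_left_mono; auto)+
  moreover have "0 \<le> a * (1-u)" "0 \<le> b * u" using u a_pos b_pos by auto
  ultimately show ?thesis using u ab unfolding BL_def by auto
qed

lemma BL_meas: "(\<lambda>u. indicator {0..1} u * BL u) \<in> borel_measurable lborel"
  unfolding BL_def by measurable

lemma PL_meas: "is_strategy \<tau> \<Longrightarrow> (\<lambda>u. indicator {0..1} u * PL \<tau> u) \<in> borel_measurable lborel"
  unfolding PL_def by (rule conv_meas) measurable

lemma PH_meas: "is_strategy \<tau> \<Longrightarrow> (\<lambda>u. indicator {0..1} u * PH \<tau> u) \<in> borel_measurable lborel"
  unfolding PH_def
proof (rule conv_meas)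
  fix m
  show "(\<lambda>u. if m = mR then u * of_bool (snd \<tau> m mR < u) else (1-u) * of_bool (u \<le> snd \<tau> m mR)) \<in> borel_measurable lborel"
  proof (cases "m = mR")
    case True
    have "(\<lambda>u. u * of_bool (snd \<tau> m mR < u)) \<in> borel_measurable lborel" by measurable
    thus ?thesis using True by simp
  next
    case False
    have "(\<lambda>u. (1-u) * of_bool (u \<le> snd \<tau> m mR)) \<in> borel_measurable lborel" by measurable
    thus ?thesis using False by simp
  qed
qed

lemma BL_int: "integrable lborel (\<lambda>u. indicator {0..1} u * (BL u * f u))"
  by (rule bounded_int[OF BL_meas]) (use BL_bd in fastforce)

lemma pu_int: "is_strategy \<tau> \<Longrightarrow> integrable lborel (\<lambda>u. indicator {0..1} u * (payoff_u f \<tau> sL u * f u))"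
proof -
  assume s: "is_strategy \<tau>"
  have e: "(\<lambda>u. indicator {0..1} u * (a * PL \<tau> u + b * PH \<tau> u)) = (\<lambda>u. a * (indicator {0..1} u * PL \<tau> u) + b * (indicator {0..1} u * PH \<tau> u))"
    by (rule ext) (simp add: algebra_simps)
  have m: "(\<lambda>u. indicator {0..1} u * (a * PL \<tau> u + b * PH \<tau> u)) \<in> borel_measurable lborel"
    unfolding e using PL_meas[OF s] PH_meas[OF s] by measurable
  have "integrable lborel (\<lambda>u. indicator {0..1} u * ((a * PL \<tau> u + b * PH \<tau> u) * f u))"
  proof (rule bounded_int[OF m])
    fix u :: real assume u: "u \<in> {0..1}"
    show "\<bar>a * PL \<tau> u + b * PH \<tau> u\<bar> \<le> 1" using pu_le[OF s u] BL_bd[OF u] pu_L[OF s] by auto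
  qed
  thus ?thesis using pu_L[OF s] by simp
qed

lemma payoff_LL: "payoff f sL sL = integral\<^sup>L lborel (\<lambda>u. indicator {0..1} u * (BL u * f u))"
  unfolding payoff_def set_lebesgue_integral_def
  by (rule Bochner_Integration.integral_cong) (auto simp: pu_self indicator_def)

lemma AE_eqL:
  assumes s: "is_strategy \<tau>" and eq: "payoff f \<tau> sL = payoff f sL sL"
  shows "AE u in lborel. u \<in> {0..1} \<longrightarrow> a * PL \<tau> u + b * PH \<tau> u = BL u"
proof -
  define D where "D u = indicator {0..1} u * (BL u * f u) - indicator {0..1} u * (payoff_u f \<tau> sL u * f u)" for u
  have I: "integrable lborel D" unfolding D_def
    by (intro Bochner_Integration.integrable_diff BL_int pu_int s)
  have "integral\<^sup>L lborel D = 0" unfolding D_def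
    using eq BL_int pu_int[OF s] payoff_LL
    by (simp add: Bochner_Integration.integral_diff payoff_def set_lebesgue_integral_def)
  moreover have nn: "AE u in lborel. 0 \<le> D u"
  proof (rule AE_I2)
    fix u show "0 \<le> D u"
    proof (cases "u \<in> {0..1}")
      case True
      hence "payoff_u f \<tau> sL u * f u \<le> BL u * f u"
        using pu_le[OF s True] fpos True by (intro mult_right_mono) (auto simp: less_imp_le)
      thus ?thesis using True by (simp add: D_def)
    qed (simp add: D_def)
  qed
  ultimately have "AE u in lborel. D u = 0" using integral_nonneg_eq_0_iff_AE[OF I nn] by simp
  thus ?thesis
  proof (rule AE_mp, intro AE_I2 impI)
    fix u assume "D u = 0" "u \<in> {0..1}"
    hence "(BL u - payoff_u f \<tau> sL u) * f u = 0" by (simp add: D_def algebra_simps)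
    moreover have "f u > 0" using fpos \<open>u \<in> {0..1}\<close> by auto
    ultimately show "a * PL \<tau> u + b * PH \<tau> u = BL u" using pu_L[OF s] by simp
  qed
qed

definition "goodL \<tau> u \<longleftrightarrow> u \<in> {0..1} \<and> u \<noteq> 1/2 \<and> u \<noteq> 1 \<and>
  (u < 1/2 \<longrightarrow> fst \<tau> u mR = 0 \<and> (\<forall>m. 0 < fst \<tau> u m \<longrightarrow> u \<le> snd \<tau> m mL \<and> (m \<noteq> mR \<longrightarrow> u \<le> snd \<tau> m mR))) \<and>
  (1/2 < u \<longrightarrow> fst \<tau> u mR = 1 \<and> snd \<tau> mR mR < u \<and> u \<le> snd \<tau> mR mL \<and> (\<forall>m. m \<noteq> mR \<longrightarrow> fst \<tau> u m = 0))"

lemma goodL_pt: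
  assumes s: "is_strategy \<tau>" and u: "u \<in> {0..1}" "u \<noteq> 1/2" "u \<noteq> 1"
    and eq: "a * PL \<tau> u + b * PH \<tau> u = BL u"
  shows "goodL \<tau> u"
proof -
  define p where "p = fst \<tau> u"
  define H where "H = (if u \<le> 1/2 then 1 - u else u)"
  define cL where "cL m = (1-u) * of_bool (u \<le> snd \<tau> m mL)" for m
  define cH where "cH m = (if m = mR then u * of_bool (snd \<tau> m mR < u) else (1-u) * of_bool (u \<le> snd \<tau> m mR))" for m
  have pn: "\<And>m. 0 \<le> p m" and ps: "(\<Sum>m\<in>UNIV. p m) = 1" using st_nonneg[OF s u(1)] st_sum[OF s u(1)] by (auto simp: p_def)
  have b1: "0 \<le> PL \<tau> u" "PL \<tau> u \<le> 1 - u" using PL_bd[OF s u(1)] by auto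
  have b2: "0 \<le> PH \<tau> u" "PH \<tau> u \<le> H" using PH_bd[OF s u(1)] by (auto simp: H_def)
  have z: "a * ((1-u) - PL \<tau> u) + b * (H - PH \<tau> u) = 0"
    using eq BL_eq[of u] unfolding H_def by (simp add: algebra_simps)
  have z1: "a * ((1-u) - PL \<tau> u) \<ge> 0" "b * (H - PH \<tau> u) \<ge> 0" using a_pos b_pos b1 b2 by auto
  have "a * ((1-u) - PL \<tau> u) = 0" "b * (H - PH \<tau> u) = 0" using z z1 by linarith+
  hence PLe: "PL \<tau> u = 1 - u" and PHe: "PH \<tau> u = H" using a_pos b_pos by auto
  have eqL: "p m * ((1-u) - cL m) = 0" for m
  proof (rule conv_eq[OF pn ps])
    show "cL m \<le> 1 - u" for m using u by (simp add: cL_def)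
    show "(\<Sum>m\<in>UNIV. p m * cL m) = 1 - u" using PLe by (simp add: PL_def p_def cL_def)
  qed
  have eqH: "p m * (H - cH m) = 0" for m
  proof (rule conv_eq[OF pn ps])
    show "cH m \<le> H" for m using u by (auto simp: cH_def H_def)
    show "(\<Sum>m\<in>UNIV. p m * cH m) = H" using PHe by (simp add: PH_def p_def cH_def)
  qed
  have low: "fst \<tau> u mR = 0 \<and> (\<forall>m. 0 < fst \<tau> u m \<longrightarrow> u \<le> snd \<tau> m mL \<and> (m \<noteq> mR \<longrightarrow> u \<le> snd \<tau> m mR))"
    if ul: "u < 1/2"
  proof (intro conjI allI impI)
    have "H - cH mR > 0" using ul u by (auto simp: H_def cH_def)
    thus "fst \<tau> u mR = 0" using eqH[of mR] by (simp add: p_def)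
  next
    fix m assume "0 < fst \<tau> u m"
    hence "(1-u) - cL m = 0" using eqL[of m] by (simp add: p_def)
    thus "u \<le> snd \<tau> m mL" using ul by (cases "u \<le> snd \<tau> m mL") (auto simp: cL_def)
  next
    fix m assume "0 < fst \<tau> u m" "m \<noteq> mR"
    hence "H - cH m = 0" using eqH[of m] by (simp add: p_def)
    thus "u \<le> snd \<tau> m mR" using ul \<open>m \<noteq> mR\<close> by (cases "u \<le> snd \<tau> m mR") (auto simp: cH_def H_def)
  qed
  have high: "fst \<tau> u mR = 1 \<and> snd \<tau> mR mR < u \<and> u \<le> snd \<tau> mR mL \<and> (\<forall>m. m \<noteq> mR \<longrightarrow> fst \<tau> u m = 0)"
    if uh: "1/2 < u"
  proof -
    have o: "fst \<tau> u m = 0" if "m \<noteq> mR" for m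
    proof -
      have "H - cH m > 0" using uh u that by (auto simp: H_def cH_def)
      thus ?thesis using eqH[of m] by (simp add: p_def)
    qed
    have "(\<Sum>m\<in>UNIV. p m) = p mR + (\<Sum>m\<in>UNIV - {mR}. p m)" by (simp add: sum.remove)
    also have "(\<Sum>m\<in>UNIV - {mR}. p m) = 0" using o by (intro sum.neutral) (auto simp: p_def)
    finally have one: "fst \<tau> u mR = 1" using ps by (simp add: p_def)
    have "H - cH mR = 0" using eqH[of mR] one by (simp add: p_def)
    hence 2: "snd \<tau> mR mR < u" using uh by (cases "snd \<tau> mR mR < u") (auto simp: cH_def H_def)
    have "(1-u) - cL mR = 0" using eqL[of mR] one by (simp add: p_def)
    hence 3: "u \<le> snd \<tau> mR mL" using u by (cases "u \<le> snd \<tau> mR mL") (auto simp: cL_def)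
    show ?thesis using one 2 3 o by auto
  qed
  show ?thesis unfolding goodL_def using u low high by auto
qed

lemma AE_goodL:
  assumes s: "is_strategy \<tau>" and eq: "payoff f \<tau> sL = payoff f sL sL"
  shows "AE u in lborel. u \<in> {0..1} \<longrightarrow> goodL \<tau> u"
  using AE_eqL[OF s eq] AE_lborel_singleton[of "1/2"] AE_lborel_singleton[of 1]
  by eventually_elim (auto intro: goodL_pt[OF s])


end


lemma br_bd:
  fixes u v x y :: real
  assumes "u \<in> {0..1}"
  shows "(1 - u) * of_bool (u \<le> x) * of_bool (v \<le> y) + u * of_bool (u > x) * of_bool (v > y) \<le> max (1-u) u
       \<and> 0 \<le> (1 - u) * of_bool (u \<le> x) * of_bool (v \<le> y) + u * of_bool (u > x) * of_bool (v > y)"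
  using assms by (cases "u \<le> x"; cases "v \<le> y") auto

lemma uv_bound:
  assumes s: "is_strategy \<sigma>" and t: "is_strategy \<tau>" and u: "u \<in> {0..1}" and v: "v \<in> {0..1}"
  shows "payoff_uv \<sigma> \<tau> u v \<le> max (1-u) u \<and> 0 \<le> payoff_uv \<sigma> \<tau> u v"
proof -
  define br where "br m m' = (1 - u) * of_bool (u \<le> snd \<sigma> m m') * of_bool (v \<le> snd \<tau> m' m)
         + u * of_bool (u > snd \<sigma> m m') * of_bool (v > snd \<tau> m' m)" for m m'
  have e: "payoff_uv \<sigma> \<tau> u v = (\<Sum>m\<in>UNIV. fst \<sigma> u m * (\<Sum>m'\<in>UNIV. fst \<tau> v m' * br m m'))"
    unfolding payoff_uv_def br_def by (simp add: sum_distrib_left mult.assoc)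
  have bb: "br m m' \<le> max (1-u) u" "0 \<le> br m m'" for m m' using br_bd[OF u] unfolding br_def by auto
  have inner: "(\<Sum>m'\<in>UNIV. fst \<tau> v m' * br m m') \<le> max (1-u) u \<and> 0 \<le> (\<Sum>m'\<in>UNIV. fst \<tau> v m' * br m m')" for m
    by (intro conjI conv_le conv_ge[where K=0]) (auto simp: st_nonneg[OF t v] st_sum[OF t v] bb mult_left_mono)
  show ?thesis unfolding e
    by (intro conjI conv_le conv_ge[where K=0]) (auto simp: st_nonneg[OF s u] st_sum[OF s u] inner mult_left_mono)
qed

context G begin

definition W :: "real \<Rightarrow> real \<Rightarrow> real" where "W u v = (if u \<le> 1/2 then 1 - u else if v \<le> 1/2 then 1 - u else u)"

lemma uv_sig_tau:
  assumes s: "is_strategy \<tau>" and u: "u \<in> {0..1}" and g: "goodL \<tau> v"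
  shows "payoff_uv sL \<tau> u v = W u v"
proof -
  define c where "c = (if u \<le> 1/2 then mL else mR)"
  define br where "br m' = (1 - u) * of_bool (u \<le> snd sL c m') * of_bool (v \<le> snd \<tau> m' c)
      + u * of_bool (u > snd sL c m') * of_bool (v > snd \<tau> m' c)" for m'
  have v: "v \<in> {0..1}" "v \<noteq> 1/2" using g by (auto simp: goodL_def)
  have e: "payoff_uv sL \<tau> u v = (\<Sum>m'\<in>UNIV. fst \<tau> v m' * br m')"
    unfolding br_def by (rule payoff_uv_delta1) (simp add: fst_sL c_def)
  have t: "fst \<tau> v m' * br m' = fst \<tau> v m' * W u v" for m'
  proof (cases "fst \<tau> v m' = 0")
    case False
    hence pos: "fst \<tau> v m' > 0" using st_nonneg[OF s v(1), of m'] by linarith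
    show ?thesis
    proof (cases "u \<le> 1/2")
      case uL: True
      show ?thesis
      proof (cases "v < 1/2")
        case True
        hence "v \<le> snd \<tau> m' mL" using g pos by (auto simp: goodL_def)
        thus ?thesis using uL u ne by (simp add: br_def c_def snd_sL W_def)
      next
        case False
        hence vh: "1/2 < v" using v by auto
        hence "m' = mR" using g pos by (auto simp: goodL_def)
        moreover have "v \<le> snd \<tau> mR mL" using g vh by (auto simp: goodL_def)
        ultimately show ?thesis using uL u ne vh by (simp add: br_def c_def snd_sL W_def)
      qed
    next
      case uH: False
      show ?thesis
      proof (cases "v < 1/2")
        case True
        hence "m' \<noteq> mR" "v \<le> snd \<tau> m' mR" using g pos by (auto simp: goodL_def)
        thus ?thesis using uH u ne True by (simp add: br_def c_def snd_sL W_def)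
      next
        case False
        hence vh: "1/2 < v" using v by auto
        hence "m' = mR" using g pos by (auto simp: goodL_def)
        moreover have "snd \<tau> mR mR < v" using g vh by (auto simp: goodL_def)
        ultimately show ?thesis using uH u ne vh by (simp add: br_def c_def snd_sL W_def)
      qed
    qed
  qed simp
  show ?thesis unfolding e by (rule conv_eqK[OF st_sum[OF s v(1)] t])
qed

lemma W_meas: "(\<lambda>v. indicator {0..1} v * W u v) \<in> borel_measurable lborel"
  unfolding W_def by measurable

lemma W_int: "u \<in> {0..1} \<Longrightarrow> integrable lborel (\<lambda>v. indicator {0..1} v * (W u v * f v))"
  by (rule bounded_int[OF W_meas]) (auto simp: W_def)

lemma W_integral: "(LINT v:{0..1}|lborel. W u v * f v) = BL u"
proof -
  have "(LINT v:{0..1}|lborel. W u v * f v) = (1 - u) * a + (if u \<le> 1/2 then 1 - u else u) * b"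
    by (rule piecewise[OF W_meas]) (auto simp: W_def)
  thus ?thesis using BL_eq[of u] by (simp add: mult.commute)
qed

lemma pu_sig_tau:
  assumes s: "is_strategy \<tau>" and ae: "AE v in lborel. v \<in> {0..1} \<longrightarrow> goodL \<tau> v" and u: "u \<in> {0..1}"
  shows "payoff_u f sL \<tau> u = BL u"
proof -
  have "payoff_u f sL \<tau> u = (1 - u) * a + (if u \<le> 1/2 then 1 - u else u) * b"
    unfolding payoff_u_def
  proof (rule piecewise[OF meas_v[OF s]])
    show "AE v in lborel. v \<in> {0..1} \<longrightarrow> payoff_uv sL \<tau> u v = (if v \<le> 1/2 then 1 - u else (if u \<le> 1/2 then 1 - u else u))"
      using ae by eventually_elim (auto simp: uv_sig_tau[OF s u] W_def)
  qed
  thus ?thesis using BL_eq[of u] by (simp add: mult.commute)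
qed

lemma uv_tau_tau:
  assumes s: "is_strategy \<tau>" and gu: "goodL \<tau> u" and gv: "goodL \<tau> v"
  shows "payoff_uv \<tau> \<tau> u v \<le> W u v"
proof -
  have u: "u \<in> {0..1}" "u \<noteq> 1/2" using gu by (auto simp: goodL_def)
  have v: "v \<in> {0..1}" "v \<noteq> 1/2" using gv by (auto simp: goodL_def)
  show ?thesis
  proof (cases "u < 1/2")
    case True
    thus ?thesis using uv_bound[OF s s u(1) v(1)] by (auto simp: W_def)
  next
    case False
    hence uh: "1/2 < u" using u by auto
    have d: "fst \<tau> u m = (if m = mR then 1 else 0)" for m using gu uh by (auto simp: goodL_def)
    define br where "br m' = (1 - u) * of_bool (u \<le> snd \<tau> mR m') * of_bool (v \<le> snd \<tau> m' mR)
      + u * of_bool (u > snd \<tau> mR m') * of_bool (v > snd \<tau> m' mR)" for m'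
    have e: "payoff_uv \<tau> \<tau> u v = (\<Sum>m'\<in>UNIV. fst \<tau> v m' * br m')"
      unfolding br_def by (rule payoff_uv_delta1) (rule d)
    have t: "fst \<tau> v m' * br m' \<le> fst \<tau> v m' * W u v" for m'
    proof (cases "fst \<tau> v m' = 0")
      case False
      hence pos: "fst \<tau> v m' > 0" using st_nonneg[OF s v(1), of m'] by linarith
      have "br m' \<le> W u v"
      proof (cases "v < 1/2")
        case True
        hence "m' \<noteq> mR" "v \<le> snd \<tau> m' mR" using gv pos by (auto simp: goodL_def)
        thus ?thesis using True uh u by (cases "u \<le> snd \<tau> mR m'") (auto simp: br_def W_def)
      next
        case False
        thus ?thesis using uh u v br_bd[OF u(1), of "snd \<tau> mR m'" v "snd \<tau> m' mR"] by (auto simp: br_def W_def)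
      qed
      thus ?thesis using pos by (intro mult_left_mono) auto
    qed simp
    show ?thesis unfolding e by (rule conv_le[OF _ st_sum[OF s v(1)] t]) (rule st_nonneg[OF s v(1)])
  qed
qed

lemma pu_tau_tau:
  assumes s: "is_strategy \<tau>" and ae: "AE v in lborel. v \<in> {0..1} \<longrightarrow> goodL \<tau> v" and gu: "goodL \<tau> u"
  shows "payoff_u f \<tau> \<tau> u \<le> BL u"
proof -
  have u: "u \<in> {0..1}" using gu by (auto simp: goodL_def)
  have "payoff_u f \<tau> \<tau> u = integral\<^sup>L lborel (\<lambda>v. indicator {0..1} v * (payoff_uv \<tau> \<tau> u v * f v))"
    by (simp add: payoff_u_def set_lebesgue_integral_def)
  also have "\<dots> \<le> integral\<^sup>L lborel (\<lambda>v. indicator {0..1} v * (W u v * f v))"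
  proof (rule integral_mono_AE'[OF W_int[OF u]])
    show "AE v in lborel. indicator {0..1} v * (payoff_uv \<tau> \<tau> u v * f v) \<le> indicator {0..1} v * (W u v * f v)"
      using ae
    proof eventually_elim
      case (elim v)
      show ?case
      proof (cases "v \<in> {0..1}")
        case True
        hence "payoff_uv \<tau> \<tau> u v * f v \<le> W u v * f v"
          using elim uv_tau_tau[OF s gu] fpos by (intro mult_right_mono) (auto simp: less_imp_le)
        thus ?thesis using True by simp
      qed simp
    qed
    show "AE v in lborel. 0 \<le> indicator {0..1} v * (W u v * f v)"
    proof (rule AE_I2)
      fix v show "0 \<le> indicator {0..1} v * (W u v * f v)"
        using u fpos by (cases "v \<in> {0..1}") (auto simp: W_def less_imp_le)
    qed
  qed
  also have "\<dots> = BL u" using W_integral[of u] by (simp add: set_lebesgue_integral_def)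
  finally show ?thesis .
qed

lemma payoff_tau_tau:
  assumes s: "is_strategy \<tau>" and ae: "AE v in lborel. v \<in> {0..1} \<longrightarrow> goodL \<tau> v"
  shows "payoff f \<tau> \<tau> \<le> payoff f sL sL"
proof -
  have "payoff f \<tau> \<tau> = integral\<^sup>L lborel (\<lambda>u. indicator {0..1} u * (payoff_u f \<tau> \<tau> u * f u))"
    by (simp add: payoff_def set_lebesgue_integral_def)
  also have "\<dots> \<le> integral\<^sup>L lborel (\<lambda>u. indicator {0..1} u * (BL u * f u))"
  proof (rule integral_mono_AE'[OF BL_int])
    show "AE u in lborel. indicator {0..1} u * (payoff_u f \<tau> \<tau> u * f u) \<le> indicator {0..1} u * (BL u * f u)"
      using ae
    proof eventually_elim
      case (elim u)
      show ?case
      proof (cases "u \<in> {0..1}")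
        case True
        hence "payoff_u f \<tau> \<tau> u * f u \<le> BL u * f u"
          using elim pu_tau_tau[OF s ae] fpos by (intro mult_right_mono) (auto simp: less_imp_le)
        thus ?thesis using True by simp
      qed simp
    qed
    show "AE u in lborel. 0 \<le> indicator {0..1} u * (BL u * f u)"
    proof (rule AE_I2)
      fix u show "0 \<le> indicator {0..1} u * (BL u * f u)"
        using BL_bd[of u] fpos by (cases "u \<in> {0..1}") (auto simp: less_imp_le)
    qed
  qed
  also have "\<dots> = payoff f sL sL" by (rule payoff_LL[symmetric])
  finally show ?thesis .
qed

lemma payoff_sig_tau:
  assumes s: "is_strategy \<tau>" and ae: "AE v in lborel. v \<in> {0..1} \<longrightarrow> goodL \<tau> v"
  shows "payoff f sL \<tau> = payoff f sL sL"
  unfolding payoff_LL unfolding payoff_def set_lebesgue_integral_def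
  by (rule Bochner_Integration.integral_cong) (auto simp: pu_sig_tau[OF s ae] indicator_def)

lemma neutral_sL: "neutrally_stable f sL"
  unfolding neutrally_stable_def
  using equil_sL AE_goodL payoff_tau_tau payoff_sig_tau by auto

end


context G begin

lemma good2:
  assumes U: "(UNIV :: 'm set) = {mL, mR}" and s: "is_strategy \<tau>" and g: "goodL \<tau> u"
  shows "u < 1/2 \<Longrightarrow> fst \<tau> u mL = 1 \<and> fst \<tau> u mR = 0"
    and "1/2 < u \<Longrightarrow> fst \<tau> u mL = 0 \<and> fst \<tau> u mR = 1"
proof -
  have u: "u \<in> {0..1}" using g by (auto simp: goodL_def)
  have "(\<Sum>m\<in>UNIV. fst \<tau> u m) = fst \<tau> u mL + fst \<tau> u mR" unfolding U using ne by simp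
  hence S: "fst \<tau> u mL + fst \<tau> u mR = 1" using st_sum[OF s u] by simp
  show "u < 1/2 \<Longrightarrow> fst \<tau> u mL = 1 \<and> fst \<tau> u mR = 0" using g S by (auto simp: goodL_def)
  show "1/2 < u \<Longrightarrow> fst \<tau> u mL = 0 \<and> fst \<tau> u mR = 1" using g S ne by (auto simp: goodL_def)
qed

lemma ess_equivL:
  assumes U: "(UNIV :: 'm set) = {mL, mR}" and s: "is_strategy \<tau>" and eq: "payoff f \<tau> sL = payoff f sL sL"
  shows "strat_equiv f \<tau> sL"
proof -
  have ae: "AE u in lborel. u \<in> {0..1} \<longrightarrow> goodL \<tau> u" by (rule AE_goodL[OF s eq])
  have mm: "m = mL \<or> m = mR" for m :: 'm using U by auto
  have dm: "(\<lambda>u. ennreal (f u * indicator {0..1} u)) \<in> borel_measurable lborel"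
  proof -
    have "(\<lambda>u. f u * indicator {0..1} u) \<in> borel_measurable lborel"
      using fmeas by (simp add: mult.commute)
    from measurable_compose[OF this measurable_ennreal] show ?thesis by (simp add: comp_def)
  qed
  have A: "AE u in density lborel (\<lambda>u. ennreal (f u * indicator {0..1} u)). \<forall>m. fst \<tau> u m = fst sL u m"
    unfolding AE_density[OF dm] using ae
  proof eventually_elim
    case (elim u)
    show ?case
    proof (intro impI allI)
      fix m assume "0 < ennreal (f u * indicator {0..1} u)"
      hence u: "u \<in> {0..1}" by (cases "u \<in> {0..1}") auto
      hence g: "goodL \<tau> u" using elim by auto
      have "u \<noteq> 1/2" using g by (auto simp: goodL_def)
      hence "u < 1/2 \<or> 1/2 < u" by auto
      thus "fst \<tau> u m = fst sL u m"
        using good2[OF U s g] mm[of m] ne by (auto simp: fst_sL)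
    qed
  qed
  have t1: "1/2 \<le> snd \<tau> mL m'" for m'
  proof (rule ccontr)
    assume "\<not> ?thesis"
    hence x: "snd \<tau> mL m' < 1/2" by simp
    have "0 \<le> snd \<tau> mL m'" using st_xi[OF s] by auto
    then obtain u where u: "snd \<tau> mL m' < u" "u < 1/2" "u \<in> {0..1} \<longrightarrow> goodL \<tau> u"
      using ex_point[OF ae x] by auto
    have "u \<in> {0..1}" using u \<open>0 \<le> snd \<tau> mL m'\<close> by auto
    hence g: "goodL \<tau> u" using u by auto
    have "fst \<tau> u mL > 0" using good2(1)[OF U s g u(2)] by simp
    hence "u \<le> snd \<tau> mL m'" using g u(2) ne mm[of m'] by (auto simp: goodL_def)
    thus False using u by simp
  qed
  have t3: "snd \<tau> mR mR \<le> 1/2"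
  proof (rule ccontr)
    assume "\<not> ?thesis"
    hence x: "1/2 < snd \<tau> mR mR" by simp
    have "snd \<tau> mR mR \<le> 1" using st_xi[OF s] by auto
    obtain u where u: "1/2 < u" "u < snd \<tau> mR mR" "u \<in> {0..1} \<longrightarrow> goodL \<tau> u"
      using ex_point[OF ae x] by auto
    have "u \<in> {0..1}" using u \<open>snd \<tau> mR mR \<le> 1\<close> by auto
    hence g: "goodL \<tau> u" using u by auto
    thus False using u by (auto simp: goodL_def)
  qed
  have t4: "snd \<tau> mR mL = 1"
  proof (rule ccontr)
    assume "\<not> ?thesis"
    hence x: "max (snd \<tau> mR mL) (1/2) < 1" using st_xi[OF s, of mR mL] by auto
    obtain u where u: "max (snd \<tau> mR mL) (1/2) < u" "u < 1" "u \<in> {0..1} \<longrightarrow> goodL \<tau> u"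
      using ex_point[OF ae x] by auto
    have "u \<in> {0..1}" using u by auto
    hence g: "goodL \<tau> u" using u by auto
    thus False using u by (auto simp: goodL_def)
  qed
  have hm: "(\<lambda>u. indicator {0..1} u * fst \<tau> u m) \<in> borel_measurable lborel" for m by (rule st_meas[OF s])
  have JL: "(LINT u:{0..x}|lborel. f u * fst \<tau> u mL) = (LINT u:{0..1}|lborel. f u * fst \<tau> u mL)"
    if x: "1/2 \<le> x" "x \<le> 1" for x
  proof -
    have e: "(\<lambda>u. indicator {0..y} u *\<^sub>R (f u * fst \<tau> u mL)) =
        (\<lambda>u. indicator {0..y} u * ((indicator {0..1} u * f u) * (indicator {0..1} u * fst \<tau> u mL)))"
      if "y \<le> 1" for y :: real
      using that by (auto simp: indicator_def)
    have m: "(\<lambda>u. indicator {0..y} u * ((indicator {0..1} u * f u) * (indicator {0..1} u * fst \<tau> u mL))) \<in> borel_measurable lborel" for y :: real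
      by (intro borel_measurable_times borel_measurable_indicator fmeas hm) auto
    show ?thesis unfolding set_lebesgue_integral_def e[OF x(2)] e[OF order_refl]
    proof (rule integral_cong_AE[OF m m])
      show "AE u in lborel. indicator {0..x} u * ((indicator {0..1} u * f u) * (indicator {0..1} u * fst \<tau> u mL)) =
          indicator {0..1} u * ((indicator {0..1} u * f u) * (indicator {0..1} u * fst \<tau> u mL))"
        using ae
      proof eventually_elim
        case (elim u)
        show ?case
        proof (cases "u \<in> {0..1}")
          case True
          hence g: "goodL \<tau> u" using elim by auto
          show ?thesis
          proof (cases "u \<le> x")
            case False
            hence "1/2 < u" using x by auto
            hence "fst \<tau> u mL = 0" using good2(2)[OF U s g] by simp
            thus ?thesis by simp
          qed (use True in \<open>auto simp: indicator_def\<close>)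
        qed (use x in \<open>auto simp: indicator_def\<close>)
      qed
    qed
  qed
  have JR: "(LINT u:{0..x}|lborel. f u * fst \<tau> u mR) = 0" if x: "x \<le> 1/2" for x
    unfolding set_lebesgue_integral_def
  proof (rule integral_eq_zero_AE)
    show "AE u in lborel. indicator {0..x} u *\<^sub>R (f u * fst \<tau> u mR) = 0"
      using ae
    proof eventually_elim
      case (elim u)
      show ?case
      proof (cases "u \<in> {0..x}")
        case True
        hence u: "u \<in> {0..1}" using x by auto
        hence g: "goodL \<tau> u" using elim by auto
        hence "u < 1/2" using True x by (auto simp: goodL_def)
        hence "fst \<tau> u mR = 0" using good2(1)[OF U s g] by simp
        thus ?thesis by simp
      qed simp
    qed
  qed
  have B: "Fm f (fst \<tau>) m (snd \<tau> m m') = Fm f (fst \<tau>) m (snd sL m m')" for m m'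
  proof (cases "m = mL")
    case True
    have s1: "snd sL mL m' = 1" using ne by (simp add: snd_sL)
    have x: "1/2 \<le> snd \<tau> mL m'" "snd \<tau> mL m' \<le> 1" using t1 st_xi[OF s] by auto
    have e1: "(LINT u:{0..snd \<tau> m m'}|lborel. f u * fst \<tau> u m) = (LINT u:{0..snd sL m m'}|lborel. f u * fst \<tau> u m)"
      unfolding True s1 by (rule JL[OF x])
    show ?thesis unfolding Fm_def e1 by (rule refl)
  next
    case False
    hence m: "m = mR" using mm by auto
    show ?thesis
    proof (cases "m' = mR")
      case True
      have s1: "snd sL mR mR = 0" by (simp add: snd_sL)
      have e1: "(LINT u:{0..snd \<tau> m m'}|lborel. f u * fst \<tau> u m) = (LINT u:{0..snd sL m m'}|lborel. f u * fst \<tau> u m)"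
        unfolding m True s1 JR[OF t3] by (rule JR[symmetric]) simp
      show ?thesis unfolding Fm_def e1 by (rule refl)
    next
      case False
      hence "m' = mL" using mm by auto
      hence "snd \<tau> m m' = snd sL m m'" using m t4 ne by (simp add: snd_sL)
      thus ?thesis by simp
    qed
  qed
  show ?thesis unfolding strat_equiv_def using A B by auto
qed

lemma ess_sL: "(UNIV :: 'm set) = {mL, mR} \<Longrightarrow> evolutionarily_stable f sL"
  unfolding evolutionarily_stable_def using equil_sL ess_equivL by blast

end


context G begin

abbreviation "sR \<equiv> sigma_R mL mR"

lemma fst_sR: "fst sR u m = (if m = (if u \<le> 1/2 then mL else mR) then 1 else 0)"
  by (simp add: sigma_R_def mu_star_def)
lemma fst_sR': "fst sR u m = (if u \<le> 1/2 then (if m = mL then 1 else 0) else (if m = mR then 1 else 0))"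
  by (simp add: sigma_R_def mu_star_def)
lemma snd_sR: "snd sR m m' = (if m = mL \<and> m' = mL then 1 else 0)"
  by (simp add: sigma_R_def xi_R_def)

lemma strat_sR: "is_strategy sR"
proof -
  have "set_borel_measurable lborel {0..1} (\<lambda>u. fst sR u m)" for m
  proof -
    have e: "(\<lambda>u. indicator {0..1} u *\<^sub>R fst sR u m) = (\<lambda>u. indicator {0..1} u * (indicator {..1/2} u * (if m = mL then 1 else 0) + indicator {1/2<..} u * (if m = mR then 1 else 0)))"
      by (rule ext) (simp add: fst_sR' indicator_def)
    show ?thesis unfolding set_borel_measurable_def e by (intro borel_measurable_times borel_measurable_add borel_measurable_indicator borel_measurable_const) auto
  qed
  moreover have "(\<Sum>m\<in>UNIV. fst sR u m) = 1" for u
    unfolding fst_sR by simp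
  ultimately show ?thesis unfolding is_strategy_def by (auto simp: fst_sR snd_sR)
qed

definition "QL \<tau> u = (\<Sum>m\<in>UNIV. fst \<tau> u m *
   (if m = mL then (1-u) * of_bool (u \<le> snd \<tau> m mL) else u * of_bool (snd \<tau> m mL < u)))"
definition "QH \<tau> u = (\<Sum>m\<in>UNIV. fst \<tau> u m * (u * of_bool (snd \<tau> m mR < u)))"
definition "BR u = (if u \<le> 1/2 then a * (1-u) + b * u else u)"

lemma BR_eq: "a * (if u \<le> 1/2 then 1 - u else u) + b * u = BR u"
proof -
  have "a * u + b * u = (a + b) * u" by (simp add: algebra_simps)
  thus ?thesis unfolding BR_def using ab by auto
qed

lemma uvR: "v \<in> {0..1} \<Longrightarrow> v \<noteq> 0 \<Longrightarrow> payoff_uv \<tau> sR u v = (if v \<le> 1/2 then QL \<tau> u else QH \<tau> u)"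
proof (cases "v \<le> 1/2")
  case True
  assume v: "v \<in> {0..1}" "v \<noteq> 0"
  have "payoff_uv \<tau> sR u v = (\<Sum>m\<in>UNIV. fst \<tau> u m *
     ((1 - u) * of_bool (u \<le> snd \<tau> m mL) * of_bool (v \<le> snd sR mL m)
      + u * of_bool (u > snd \<tau> m mL) * of_bool (v > snd sR mL m)))"
    by (rule payoff_uv_delta2) (use True in \<open>simp add: fst_sR\<close>)
  also have "\<dots> = QL \<tau> u" unfolding QL_def
  proof (intro sum.cong refl)
    fix m
    show "fst \<tau> u m * ((1 - u) * of_bool (u \<le> snd \<tau> m mL) * of_bool (v \<le> snd sR mL m)
      + u * of_bool (u > snd \<tau> m mL) * of_bool (v > snd sR mL m)) =
      fst \<tau> u m * (if m = mL then (1-u) * of_bool (u \<le> snd \<tau> m mL) else u * of_bool (snd \<tau> m mL < u))"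
      using v by (cases "m = mL") (auto simp: snd_sR)
  qed
  finally show ?thesis using True by simp
next
  case False
  assume v: "v \<in> {0..1}" "v \<noteq> 0"
  have "payoff_uv \<tau> sR u v = (\<Sum>m\<in>UNIV. fst \<tau> u m *
     ((1 - u) * of_bool (u \<le> snd \<tau> m mR) * of_bool (v \<le> snd sR mR m)
      + u * of_bool (u > snd \<tau> m mR) * of_bool (v > snd sR mR m)))"
    by (rule payoff_uv_delta2) (use False in \<open>simp add: fst_sR\<close>)
  also have "\<dots> = QH \<tau> u" unfolding QH_def using v ne False by (simp add: snd_sR)
  finally show ?thesis using False by simp
qed

lemma pu_R: "is_strategy \<tau> \<Longrightarrow> payoff_u f \<tau> sR u = a * QL \<tau> u + b * QH \<tau> u"
proof -
  have m: "(\<lambda>v. indicator {0..1} v * payoff_uv \<tau> sR u v) \<in> borel_measurable lborel"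
    by (rule meas_v[OF strat_sR])
  have "payoff_u f \<tau> sR u = QL \<tau> u * a + QH \<tau> u * b"
    unfolding payoff_u_def
  proof (rule piecewise[OF m])
    show "AE v in lborel. v \<in> {0..1} \<longrightarrow> payoff_uv \<tau> sR u v = (if v \<le> 1/2 then QL \<tau> u else QH \<tau> u)"
      using AE_lborel_singleton[of 0] by eventually_elim (metis uvR)
  qed
  thus ?thesis by simp
qed

lemma QL_bd: "is_strategy \<tau> \<Longrightarrow> u \<in> {0..1} \<Longrightarrow> 0 \<le> QL \<tau> u \<and> QL \<tau> u \<le> (if u \<le> 1/2 then 1 - u else u)"
  unfolding QL_def
  by (intro conjI conv_ge[where K=0] conv_le) (auto simp: st_nonneg st_sum mult_left_mono)

lemma QH_bd: "is_strategy \<tau> \<Longrightarrow> u \<in> {0..1} \<Longrightarrow> 0 \<le> QH \<tau> u \<and> QH \<tau> u \<le> u"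
  unfolding QH_def
  by (intro conjI conv_ge[where K=0] conv_le) (auto simp: st_nonneg st_sum mult_left_mono)

lemma pu_leR: "is_strategy \<tau> \<Longrightarrow> u \<in> {0..1} \<Longrightarrow> payoff_u f \<tau> sR u \<le> BR u \<and> 0 \<le> payoff_u f \<tau> sR u"
proof -
  assume s: "is_strategy \<tau>" and u: "u \<in> {0..1}"
  have 1: "a * QL \<tau> u \<le> a * (if u \<le> 1/2 then 1 - u else u)" using QL_bd[OF s u] a_pos by (intro mult_left_mono) auto
  have 2: "b * QH \<tau> u \<le> b * u" using QH_bd[OF s u] b_pos by (intro mult_left_mono) auto
  have 3: "0 \<le> a * QL \<tau> u" "0 \<le> b * QH \<tau> u" using QL_bd[OF s u] QH_bd[OF s u] a_pos b_pos by auto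
  note BR_eq[of u]
  thus ?thesis using 1 2 3 pu_R[OF s] by auto
qed

lemma pu_selfR: "u \<in> {0..1} \<Longrightarrow> payoff_u f sR sR u = BR u"
proof -
  assume u: "u \<in> {0..1}"
  have "QL sR u = (if u \<le> 1/2 then 1 - u else u)" unfolding QL_def using ne u by (simp add: snd_sR fst_sR sd2)
  moreover have "QH sR u = u" unfolding QH_def using ne u by (cases "u = 0") (auto simp: snd_sR fst_sR sd2)
  ultimately show ?thesis using pu_R[OF strat_sR] BR_eq[of u] by simp
qed

lemma equil_sR: "equilibrium f sR"
  unfolding equilibrium_def using strat_sR pu_leR pu_selfR by auto

lemma BR_bd: "u \<in> {0..1} \<Longrightarrow> 0 \<le> BR u \<and> BR u \<le> 1"
proof -
  assume u: "u \<in> {0..1}"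
  have "a * (1-u) \<le> a * 1" "b * u \<le> b * 1" using u a_pos b_pos by (intro mult_left_mono; auto)+
  moreover have "0 \<le> a * (1-u)" "0 \<le> b * u" using u a_pos b_pos by auto
  ultimately show ?thesis using u ab unfolding BR_def by auto
qed

lemma BR_meas: "(\<lambda>u. indicator {0..1} u * BR u) \<in> borel_measurable lborel"
  unfolding BR_def by measurable

lemma QH_meas: "is_strategy \<tau> \<Longrightarrow> (\<lambda>u. indicator {0..1} u * QH \<tau> u) \<in> borel_measurable lborel"
  unfolding QH_def by (rule conv_meas) measurable

lemma QL_meas: "is_strategy \<tau> \<Longrightarrow> (\<lambda>u. indicator {0..1} u * QL \<tau> u) \<in> borel_measurable lborel"
  unfolding QL_def
proof (rule conv_meas)
  fix m
  show "(\<lambda>u. if m = mL then (1-u) * of_bool (u \<le> snd \<tau> m mL) else u * of_bool (snd \<tau> m mL < u)) \<in> borel_measurable lborel"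
  proof (cases "m = mL")
    case True
    have "(\<lambda>u. (1-u) * of_bool (u \<le> snd \<tau> m mL)) \<in> borel_measurable lborel" by measurable
    thus ?thesis using True by simp
  next
    case False
    have "(\<lambda>u. u * of_bool (snd \<tau> m mL < u)) \<in> borel_measurable lborel" by measurable
    thus ?thesis using False by simp
  qed
qed

lemma BR_int: "integrable lborel (\<lambda>u. indicator {0..1} u * (BR u * f u))"
  by (rule bounded_int[OF BR_meas]) (use BR_bd in fastforce)

lemma pu_intR: "is_strategy \<tau> \<Longrightarrow> integrable lborel (\<lambda>u. indicator {0..1} u * (payoff_u f \<tau> sR u * f u))"
proof -
  assume s: "is_strategy \<tau>"
  have e: "(\<lambda>u. indicator {0..1} u * (a * QL \<tau> u + b * QH \<tau> u)) = (\<lambda>u. a * (indicator {0..1} u * QL \<tau> u) + b * (indicator {0..1} u * QH \<tau> u))"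
    by (rule ext) (simp add: algebra_simps)
  have m: "(\<lambda>u. indicator {0..1} u * (a * QL \<tau> u + b * QH \<tau> u)) \<in> borel_measurable lborel"
    unfolding e using QL_meas[OF s] QH_meas[OF s] by measurable
  have "integrable lborel (\<lambda>u. indicator {0..1} u * ((a * QL \<tau> u + b * QH \<tau> u) * f u))"
  proof (rule bounded_int[OF m])
    fix u :: real assume u: "u \<in> {0..1}"
    show "\<bar>a * QL \<tau> u + b * QH \<tau> u\<bar> \<le> 1" using pu_leR[OF s u] BR_bd[OF u] pu_R[OF s] by auto
  qed
  thus ?thesis using pu_R[OF s] by simp
qed

lemma payoff_RR: "payoff f sR sR = integral\<^sup>L lborel (\<lambda>u. indicator {0..1} u * (BR u * f u))"
  unfolding payoff_def set_lebesgue_integral_def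
  by (rule Bochner_Integration.integral_cong) (auto simp: pu_selfR indicator_def)

lemma AE_eqR:
  assumes s: "is_strategy \<tau>" and eq: "payoff f \<tau> sR = payoff f sR sR"
  shows "AE u in lborel. u \<in> {0..1} \<longrightarrow> a * QL \<tau> u + b * QH \<tau> u = BR u"
proof -
  define D where "D u = indicator {0..1} u * (BR u * f u) - indicator {0..1} u * (payoff_u f \<tau> sR u * f u)" for u
  have I: "integrable lborel D" unfolding D_def
    by (intro Bochner_Integration.integrable_diff BR_int pu_intR s)
  have "integral\<^sup>L lborel D = 0" unfolding D_def
    using eq BR_int pu_intR[OF s] payoff_RR
    by (simp add: Bochner_Integration.integral_diff payoff_def set_lebesgue_integral_def)
  moreover have nn: "AE u in lborel. 0 \<le> D u"
  proof (rule AE_I2)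
    fix u show "0 \<le> D u"
    proof (cases "u \<in> {0..1}")
      case True
      hence "payoff_u f \<tau> sR u * f u \<le> BR u * f u"
        using pu_leR[OF s True] fpos True by (intro mult_right_mono) (auto simp: less_imp_le)
      thus ?thesis using True by (simp add: D_def)
    qed (simp add: D_def)
  qed
  ultimately have "AE u in lborel. D u = 0" using integral_nonneg_eq_0_iff_AE[OF I nn] by simp
  thus ?thesis
  proof (rule AE_mp, intro AE_I2 impI)
    fix u assume "D u = 0" "u \<in> {0..1}"
    hence "(BR u - payoff_u f \<tau> sR u) * f u = 0" by (simp add: D_def algebra_simps)
    moreover have "f u > 0" using fpos \<open>u \<in> {0..1}\<close> by auto
    ultimately show "a * QL \<tau> u + b * QH \<tau> u = BR u" using pu_R[OF s] by simp
  qed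
qed

definition "goodR \<tau> u \<longleftrightarrow> u \<in> {0..1} \<and> u \<noteq> 1/2 \<and> u \<noteq> 0 \<and>
  (u < 1/2 \<longrightarrow> fst \<tau> u mL = 1 \<and> u \<le> snd \<tau> mL mL \<and> snd \<tau> mL mR < u \<and> (\<forall>m. m \<noteq> mL \<longrightarrow> fst \<tau> u m = 0)) \<and>
  (1/2 < u \<longrightarrow> fst \<tau> u mL = 0 \<and> (\<forall>m. 0 < fst \<tau> u m \<longrightarrow> snd \<tau> m mL < u \<and> snd \<tau> m mR < u))"

lemma goodR_pt:
  assumes s: "is_strategy \<tau>" and u: "u \<in> {0..1}" "u \<noteq> 1/2" "u \<noteq> 0"
    and eq: "a * QL \<tau> u + b * QH \<tau> u = BR u"
  shows "goodR \<tau> u"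
proof -
  define p where "p = fst \<tau> u"
  define H where "H = (if u \<le> 1/2 then 1 - u else u)"
  define cL where "cL m = (if m = mL then (1-u) * of_bool (u \<le> snd \<tau> m mL) else u * of_bool (snd \<tau> m mL < u))" for m
  define cH where "cH m = u * of_bool (snd \<tau> m mR < u)" for m
  have pn: "\<And>m. 0 \<le> p m" and ps: "(\<Sum>m\<in>UNIV. p m) = 1" using st_nonneg[OF s u(1)] st_sum[OF s u(1)] by (auto simp: p_def)
  have b1: "0 \<le> QL \<tau> u" "QL \<tau> u \<le> H" using QL_bd[OF s u(1)] by (auto simp: H_def)
  have b2: "0 \<le> QH \<tau> u" "QH \<tau> u \<le> u" using QH_bd[OF s u(1)] by auto
  have z: "a * (H - QL \<tau> u) + b * (u - QH \<tau> u) = 0"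
    using eq BR_eq[of u] unfolding H_def by (simp add: algebra_simps)
  have z1: "a * (H - QL \<tau> u) \<ge> 0" "b * (u - QH \<tau> u) \<ge> 0" using a_pos b_pos b1 b2 by auto
  have "a * (H - QL \<tau> u) = 0" "b * (u - QH \<tau> u) = 0" using z z1 by linarith+
  hence QLe: "QL \<tau> u = H" and QHe: "QH \<tau> u = u" using a_pos b_pos by auto
  have eqL: "p m * (H - cL m) = 0" for m
  proof (rule conv_eq[OF pn ps])
    show "cL m \<le> H" for m using u by (auto simp: cL_def H_def)
    show "(\<Sum>m\<in>UNIV. p m * cL m) = H" using QLe by (simp add: QL_def p_def cL_def)
  qed
  have eqH: "p m * (u - cH m) = 0" for m
  proof (rule conv_eq[OF pn ps])
    show "cH m \<le> u" for m using u by (auto simp: cH_def)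
    show "(\<Sum>m\<in>UNIV. p m * cH m) = u" using QHe by (simp add: QH_def p_def cH_def)
  qed
  have low: "fst \<tau> u mL = 1 \<and> u \<le> snd \<tau> mL mL \<and> snd \<tau> mL mR < u \<and> (\<forall>m. m \<noteq> mL \<longrightarrow> fst \<tau> u m = 0)"
    if ul: "u < 1/2"
  proof -
    have o: "fst \<tau> u m = 0" if "m \<noteq> mL" for m
    proof -
      have "H - cL m > 0" using ul u that by (auto simp: H_def cL_def)
      thus ?thesis using eqL[of m] by (simp add: p_def)
    qed
    have "(\<Sum>m\<in>UNIV. p m) = p mL + (\<Sum>m\<in>UNIV - {mL}. p m)" by (simp add: sum.remove)
    also have "(\<Sum>m\<in>UNIV - {mL}. p m) = 0" using o by (intro sum.neutral) (auto simp: p_def)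
    finally have one: "fst \<tau> u mL = 1" using ps by (simp add: p_def)
    have "H - cL mL = 0" using eqL[of mL] one by (simp add: p_def)
    hence 2: "u \<le> snd \<tau> mL mL" using ul by (cases "u \<le> snd \<tau> mL mL") (auto simp: cL_def H_def)
    have "u - cH mL = 0" using eqH[of mL] one by (simp add: p_def)
    hence 3: "snd \<tau> mL mR < u" using u by (cases "snd \<tau> mL mR < u") (auto simp: cH_def)
    show ?thesis using one 2 3 o by auto
  qed
  have high: "fst \<tau> u mL = 0 \<and> (\<forall>m. 0 < fst \<tau> u m \<longrightarrow> snd \<tau> m mL < u \<and> snd \<tau> m mR < u)"
    if uh: "1/2 < u"
  proof (intro conjI allI impI)
    have "H - cL mL > 0" using uh u by (auto simp: H_def cL_def)
    thus "fst \<tau> u mL = 0" using eqL[of mL] by (simp add: p_def)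
    hence nl: "m \<noteq> mL" if "0 < fst \<tau> u m" for m using that by auto
    fix m assume pos: "0 < fst \<tau> u m"
    have "H - cL m = 0" using eqL[of m] pos by (simp add: p_def)
    thus "snd \<tau> m mL < u" using uh nl[OF pos] by (cases "snd \<tau> m mL < u") (auto simp: cL_def H_def)
    have "u - cH m = 0" using eqH[of m] pos by (simp add: p_def)
    thus "snd \<tau> m mR < u" using uh by (cases "snd \<tau> m mR < u") (auto simp: cH_def)
  qed
  show ?thesis unfolding goodR_def using u low high by auto
qed

lemma AE_goodR:
  assumes s: "is_strategy \<tau>" and eq: "payoff f \<tau> sR = payoff f sR sR"
  shows "AE u in lborel. u \<in> {0..1} \<longrightarrow> goodR \<tau> u"
  using AE_eqR[OF s eq] AE_lborel_singleton[of "1/2"] AE_lborel_singleton[of 0]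
  by eventually_elim (auto intro: goodR_pt[OF s])

end


context G begin

definition WR :: "real \<Rightarrow> real \<Rightarrow> real" where "WR u v = (if u \<le> 1/2 then (if v \<le> 1/2 then 1 - u else u) else u)"

lemma uv_sig_tauR:
  assumes s: "is_strategy \<tau>" and u: "u \<in> {0..1}" and g: "goodR \<tau> v"
  shows "payoff_uv sR \<tau> u v = WR u v"
proof -
  define c where "c = (if u \<le> 1/2 then mL else mR)"
  define br where "br m' = (1 - u) * of_bool (u \<le> snd sR c m') * of_bool (v \<le> snd \<tau> m' c)
      + u * of_bool (u > snd sR c m') * of_bool (v > snd \<tau> m' c)" for m'
  have v: "v \<in> {0..1}" "v \<noteq> 1/2" using g by (auto simp: goodR_def)
  have e: "payoff_uv sR \<tau> u v = (\<Sum>m'\<in>UNIV. fst \<tau> v m' * br m')"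
    unfolding br_def by (rule payoff_uv_delta1) (simp add: fst_sR c_def)
  have t: "fst \<tau> v m' * br m' = fst \<tau> v m' * WR u v" for m'
  proof (cases "fst \<tau> v m' = 0")
    case False
    hence pos: "fst \<tau> v m' > 0" using st_nonneg[OF s v(1), of m'] by linarith
    show ?thesis
    proof (cases "u \<le> 1/2")
      case uL: True
      show ?thesis
      proof (cases "v < 1/2")
        case True
        hence "m' = mL" "v \<le> snd \<tau> mL mL" using g pos by (auto simp: goodR_def)
        thus ?thesis using uL u True by (simp add: br_def c_def snd_sR WR_def)
      next
        case False
        hence vh: "1/2 < v" using v by auto
        hence "m' \<noteq> mL" "snd \<tau> m' mL < v" using g pos by (auto simp: goodR_def)
        thus ?thesis using uL u vh by (cases "u = 0") (auto simp: br_def c_def snd_sR WR_def)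
      qed
    next
      case uH: False
      have "snd \<tau> m' mR < v"
      proof (cases "v < 1/2")
        case True
        hence "m' = mL" "snd \<tau> mL mR < v" using g pos by (auto simp: goodR_def)
        thus ?thesis by simp
      next
        case False
        hence vh: "1/2 < v" using v by auto
        thus ?thesis using g pos by (auto simp: goodR_def)
      qed
      thus ?thesis using uH u ne by (simp add: br_def c_def snd_sR WR_def)
    qed
  qed simp
  show ?thesis unfolding e by (rule conv_eqK[OF st_sum[OF s v(1)] t])
qed

lemma WR_meas: "(\<lambda>v. indicator {0..1} v * WR u v) \<in> borel_measurable lborel"
  unfolding WR_def by measurable

lemma WR_int: "u \<in> {0..1} \<Longrightarrow> integrable lborel (\<lambda>v. indicator {0..1} v * (WR u v * f v))"
  by (rule bounded_int[OF WR_meas]) (auto simp: WR_def)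

lemma WR_integral: "(LINT v:{0..1}|lborel. WR u v * f v) = BR u"
proof -
  have "(LINT v:{0..1}|lborel. WR u v * f v) = (if u \<le> 1/2 then 1 - u else u) * a + u * b"
    by (rule piecewise[OF WR_meas]) (auto simp: WR_def)
  thus ?thesis using BR_eq[of u] by (simp add: mult.commute)
qed

lemma pu_sig_tauR:
  assumes s: "is_strategy \<tau>" and ae: "AE v in lborel. v \<in> {0..1} \<longrightarrow> goodR \<tau> v" and u: "u \<in> {0..1}"
  shows "payoff_u f sR \<tau> u = BR u"
proof -
  have "payoff_u f sR \<tau> u = (if u \<le> 1/2 then 1 - u else u) * a + u * b"
    unfolding payoff_u_def
  proof (rule piecewise[OF meas_v[OF s]])
    show "AE v in lborel. v \<in> {0..1} \<longrightarrow> payoff_uv sR \<tau> u v = (if v \<le> 1/2 then (if u \<le> 1/2 then 1 - u else u) else u)"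
      using ae by eventually_elim (auto simp: uv_sig_tauR[OF s u] WR_def)
  qed
  thus ?thesis using BR_eq[of u] by (simp add: mult.commute)
qed

lemma uv_tau_tauR:
  assumes s: "is_strategy \<tau>" and gu: "goodR \<tau> u" and gv: "goodR \<tau> v"
  shows "payoff_uv \<tau> \<tau> u v \<le> WR u v"
proof -
  have u: "u \<in> {0..1}" "u \<noteq> 1/2" using gu by (auto simp: goodR_def)
  have v: "v \<in> {0..1}" "v \<noteq> 1/2" using gv by (auto simp: goodR_def)
  show ?thesis
  proof (cases "u < 1/2")
    case False
    thus ?thesis using uv_bound[OF s s u(1) v(1)] u by (auto simp: WR_def)
  next
    case True
    hence ul: "u < 1/2" .
    show ?thesis
    proof (cases "v < 1/2")
      case True
      thus ?thesis using uv_bound[OF s s u(1) v(1)] ul by (auto simp: WR_def)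
    next
      case False
      hence vh: "1/2 < v" using v by auto
      have d: "fst \<tau> u m = (if m = mL then 1 else 0)" for m using gu ul by (auto simp: goodR_def)
      define br where "br m' = (1 - u) * of_bool (u \<le> snd \<tau> mL m') * of_bool (v \<le> snd \<tau> m' mL)
        + u * of_bool (u > snd \<tau> mL m') * of_bool (v > snd \<tau> m' mL)" for m'
      have e: "payoff_uv \<tau> \<tau> u v = (\<Sum>m'\<in>UNIV. fst \<tau> v m' * br m')"
        unfolding br_def by (rule payoff_uv_delta1) (rule d)
      have t: "fst \<tau> v m' * br m' \<le> fst \<tau> v m' * WR u v" for m'
      proof (cases "fst \<tau> v m' = 0")
        case False
        hence pos: "fst \<tau> v m' > 0" using st_nonneg[OF s v(1), of m'] by linarith
        have "snd \<tau> m' mL < v" using gv pos vh by (auto simp: goodR_def)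
        hence "br m' \<le> WR u v" using ul u vh by (auto simp: br_def WR_def)
        thus ?thesis using pos by (intro mult_left_mono) auto
      qed simp
      show ?thesis unfolding e by (rule conv_le[OF _ st_sum[OF s v(1)] t]) (rule st_nonneg[OF s v(1)])
    qed
  qed
qed

lemma pu_tau_tauR:
  assumes s: "is_strategy \<tau>" and ae: "AE v in lborel. v \<in> {0..1} \<longrightarrow> goodR \<tau> v" and gu: "goodR \<tau> u"
  shows "payoff_u f \<tau> \<tau> u \<le> BR u"
proof -
  have u: "u \<in> {0..1}" using gu by (auto simp: goodR_def)
  have "payoff_u f \<tau> \<tau> u = integral\<^sup>L lborel (\<lambda>v. indicator {0..1} v * (payoff_uv \<tau> \<tau> u v * f v))"
    by (simp add: payoff_u_def set_lebesgue_integral_def)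
  also have "\<dots> \<le> integral\<^sup>L lborel (\<lambda>v. indicator {0..1} v * (WR u v * f v))"
  proof (rule integral_mono_AE'[OF WR_int[OF u]])
    show "AE v in lborel. indicator {0..1} v * (payoff_uv \<tau> \<tau> u v * f v) \<le> indicator {0..1} v * (WR u v * f v)"
      using ae
    proof eventually_elim
      case (elim v)
      show ?case
      proof (cases "v \<in> {0..1}")
        case True
        hence "payoff_uv \<tau> \<tau> u v * f v \<le> WR u v * f v"
          using elim uv_tau_tauR[OF s gu] fpos by (intro mult_right_mono) (auto simp: less_imp_le)
        thus ?thesis using True by simp
      qed simp
    qed
    show "AE v in lborel. 0 \<le> indicator {0..1} v * (WR u v * f v)"
    proof (rule AE_I2)
      fix v show "0 \<le> indicator {0..1} v * (WR u v * f v)"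
        using u fpos by (cases "v \<in> {0..1}") (auto simp: WR_def less_imp_le)
    qed
  qed
  also have "\<dots> = BR u" using WR_integral[of u] by (simp add: set_lebesgue_integral_def)
  finally show ?thesis .
qed

lemma payoff_tau_tauR:
  assumes s: "is_strategy \<tau>" and ae: "AE v in lborel. v \<in> {0..1} \<longrightarrow> goodR \<tau> v"
  shows "payoff f \<tau> \<tau> \<le> payoff f sR sR"
proof -
  have "payoff f \<tau> \<tau> = integral\<^sup>L lborel (\<lambda>u. indicator {0..1} u * (payoff_u f \<tau> \<tau> u * f u))"
    by (simp add: payoff_def set_lebesgue_integral_def)
  also have "\<dots> \<le> integral\<^sup>L lborel (\<lambda>u. indicator {0..1} u * (BR u * f u))"
  proof (rule integral_mono_AE'[OF BR_int])
    show "AE u in lborel. indicator {0..1} u * (payoff_u f \<tau> \<tau> u * f u) \<le> indicator {0..1} u * (BR u * f u)"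
      using ae
    proof eventually_elim
      case (elim u)
      show ?case
      proof (cases "u \<in> {0..1}")
        case True
        hence "payoff_u f \<tau> \<tau> u * f u \<le> BR u * f u"
          using elim pu_tau_tauR[OF s ae] fpos by (intro mult_right_mono) (auto simp: less_imp_le)
        thus ?thesis using True by simp
      qed simp
    qed
    show "AE u in lborel. 0 \<le> indicator {0..1} u * (BR u * f u)"
    proof (rule AE_I2)
      fix u show "0 \<le> indicator {0..1} u * (BR u * f u)"
        using BR_bd[of u] fpos by (cases "u \<in> {0..1}") (auto simp: less_imp_le)
    qed
  qed
  also have "\<dots> = payoff f sR sR" by (rule payoff_RR[symmetric])
  finally show ?thesis .
qed

lemma payoff_sig_tauR:
  assumes s: "is_strategy \<tau>" and ae: "AE v in lborel. v \<in> {0..1} \<longrightarrow> goodR \<tau> v"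
  shows "payoff f sR \<tau> = payoff f sR sR"
  unfolding payoff_RR unfolding payoff_def set_lebesgue_integral_def
  by (rule Bochner_Integration.integral_cong) (auto simp: pu_sig_tauR[OF s ae] indicator_def)

lemma neutral_sR: "neutrally_stable f sR"
  unfolding neutrally_stable_def
  using equil_sR AE_goodR payoff_tau_tauR payoff_sig_tauR by auto

end


context G begin

lemma good2R:
  assumes U: "(UNIV :: 'm set) = {mL, mR}" and s: "is_strategy \<tau>" and g: "goodR \<tau> u"
  shows "u < 1/2 \<Longrightarrow> fst \<tau> u mL = 1 \<and> fst \<tau> u mR = 0"
    and "1/2 < u \<Longrightarrow> fst \<tau> u mL = 0 \<and> fst \<tau> u mR = 1"
proof -
  have u: "u \<in> {0..1}" using g by (auto simp: goodR_def)
  have "(\<Sum>m\<in>UNIV. fst \<tau> u m) = fst \<tau> u mL + fst \<tau> u mR" unfolding U using ne by simp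
  hence S: "fst \<tau> u mL + fst \<tau> u mR = 1" using st_sum[OF s u] by simp
  show "u < 1/2 \<Longrightarrow> fst \<tau> u mL = 1 \<and> fst \<tau> u mR = 0" using g S ne by (auto simp: goodR_def)
  show "1/2 < u \<Longrightarrow> fst \<tau> u mL = 0 \<and> fst \<tau> u mR = 1" using g S by (auto simp: goodR_def)
qed

lemma ess_equivR:
  assumes U: "(UNIV :: 'm set) = {mL, mR}" and s: "is_strategy \<tau>" and eq: "payoff f \<tau> sR = payoff f sR sR"
  shows "strat_equiv f \<tau> sR"
proof -
  have ae: "AE u in lborel. u \<in> {0..1} \<longrightarrow> goodR \<tau> u" by (rule AE_goodR[OF s eq])
  have mm: "m = mL \<or> m = mR" for m :: 'm using U by auto
  have dm: "(\<lambda>u. ennreal (f u * indicator {0..1} u)) \<in> borel_measurable lborel"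
  proof -
    have "(\<lambda>u. f u * indicator {0..1} u) \<in> borel_measurable lborel"
      using fmeas by (simp add: mult.commute)
    from measurable_compose[OF this measurable_ennreal] show ?thesis by (simp add: comp_def)
  qed
  have A: "AE u in density lborel (\<lambda>u. ennreal (f u * indicator {0..1} u)). \<forall>m. fst \<tau> u m = fst sR u m"
    unfolding AE_density[OF dm] using ae
  proof eventually_elim
    case (elim u)
    show ?case
    proof (intro impI allI)
      fix m assume "0 < ennreal (f u * indicator {0..1} u)"
      hence u: "u \<in> {0..1}" by (cases "u \<in> {0..1}") auto
      hence g: "goodR \<tau> u" using elim by auto
      have "u \<noteq> 1/2" using g by (auto simp: goodR_def)
      hence "u < 1/2 \<or> 1/2 < u" by auto
      thus "fst \<tau> u m = fst sR u m"
        using good2R[OF U s g] mm[of m] ne by (auto simp: fst_sR)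
    qed
  qed
  have r1: "1/2 \<le> snd \<tau> mL mL"
  proof (rule ccontr)
    assume "\<not> ?thesis"
    hence x: "snd \<tau> mL mL < 1/2" by simp
    have "0 \<le> snd \<tau> mL mL" using st_xi[OF s] by auto
    then obtain u where u: "snd \<tau> mL mL < u" "u < 1/2" "u \<in> {0..1} \<longrightarrow> goodR \<tau> u"
      using ex_point[OF ae x] by auto
    have "u \<in> {0..1}" using u \<open>0 \<le> snd \<tau> mL mL\<close> by auto
    hence g: "goodR \<tau> u" using u by auto
    thus False using u by (auto simp: goodR_def)
  qed
  have r2: "snd \<tau> mL mR = 0"
  proof (rule ccontr)
    assume "\<not> ?thesis"
    hence x: "0 < min (snd \<tau> mL mR) (1/2)" using st_xi[OF s, of mL mR] by auto
    obtain u where u: "0 < u" "u < min (snd \<tau> mL mR) (1/2)" "u \<in> {0..1} \<longrightarrow> goodR \<tau> u"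
      using ex_point[OF ae x] by auto
    have "u \<in> {0..1}" using u by auto
    hence g: "goodR \<tau> u" using u by auto
    thus False using u by (auto simp: goodR_def)
  qed
  have r3: "snd \<tau> mR m' \<le> 1/2" for m'
  proof (rule ccontr)
    assume "\<not> ?thesis"
    hence x: "1/2 < snd \<tau> mR m'" by simp
    have "snd \<tau> mR m' \<le> 1" using st_xi[OF s] by auto
    obtain u where u: "1/2 < u" "u < snd \<tau> mR m'" "u \<in> {0..1} \<longrightarrow> goodR \<tau> u"
      using ex_point[OF ae x] by auto
    have "u \<in> {0..1}" using u \<open>snd \<tau> mR m' \<le> 1\<close> by auto
    hence g: "goodR \<tau> u" using u by auto
    have "fst \<tau> u mR > 0" using good2R(2)[OF U s g u(1)] by simp
    hence "snd \<tau> mR m' < u" using g u(1) mm[of m'] by (auto simp: goodR_def)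
    thus False using u by simp
  qed
  have hm: "(\<lambda>u. indicator {0..1} u * fst \<tau> u m) \<in> borel_measurable lborel" for m by (rule st_meas[OF s])
  have JL: "(LINT u:{0..x}|lborel. f u * fst \<tau> u mL) = (LINT u:{0..1}|lborel. f u * fst \<tau> u mL)"
    if x: "1/2 \<le> x" "x \<le> 1" for x
  proof -
    have e: "(\<lambda>u. indicator {0..y} u *\<^sub>R (f u * fst \<tau> u mL)) =
        (\<lambda>u. indicator {0..y} u * ((indicator {0..1} u * f u) * (indicator {0..1} u * fst \<tau> u mL)))"
      if "y \<le> 1" for y :: real
      using that by (auto simp: indicator_def)
    have m: "(\<lambda>u. indicator {0..y} u * ((indicator {0..1} u * f u) * (indicator {0..1} u * fst \<tau> u mL))) \<in> borel_measurable lborel" for y :: real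
      by (intro borel_measurable_times borel_measurable_indicator fmeas hm) auto
    show ?thesis unfolding set_lebesgue_integral_def e[OF x(2)] e[OF order_refl]
    proof (rule integral_cong_AE[OF m m])
      show "AE u in lborel. indicator {0..x} u * ((indicator {0..1} u * f u) * (indicator {0..1} u * fst \<tau> u mL)) =
          indicator {0..1} u * ((indicator {0..1} u * f u) * (indicator {0..1} u * fst \<tau> u mL))"
        using ae
      proof eventually_elim
        case (elim u)
        show ?case
        proof (cases "u \<in> {0..1}")
          case True
          hence g: "goodR \<tau> u" using elim by auto
          show ?thesis
          proof (cases "u \<le> x")
            case False
            hence "1/2 < u" using x by auto
            hence "fst \<tau> u mL = 0" using good2R(2)[OF U s g] by simp
            thus ?thesis by simp
          qed (use True in \<open>auto simp: indicator_def\<close>)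
        qed (use x in \<open>auto simp: indicator_def\<close>)
      qed
    qed
  qed
  have JR: "(LINT u:{0..x}|lborel. f u * fst \<tau> u mR) = 0" if x: "x \<le> 1/2" for x
    unfolding set_lebesgue_integral_def
  proof (rule integral_eq_zero_AE)
    show "AE u in lborel. indicator {0..x} u *\<^sub>R (f u * fst \<tau> u mR) = 0"
      using ae
    proof eventually_elim
      case (elim u)
      show ?case
      proof (cases "u \<in> {0..x}")
        case True
        hence u: "u \<in> {0..1}" using x by auto
        hence g: "goodR \<tau> u" using elim by auto
        hence "u < 1/2" using True x by (auto simp: goodR_def)
        hence "fst \<tau> u mR = 0" using good2R(1)[OF U s g] by simp
        thus ?thesis by simp
      qed simp
    qed
  qed
  have B: "Fm f (fst \<tau>) m (snd \<tau> m m') = Fm f (fst \<tau>) m (snd sR m m')" for m m'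
  proof (cases "m = mL")
    case mL: True
    show ?thesis
    proof (cases "m' = mL")
      case True
      have s1: "snd sR mL mL = 1" by (simp add: snd_sR)
      have x: "1/2 \<le> snd \<tau> mL mL" "snd \<tau> mL mL \<le> 1" using r1 st_xi[OF s] by auto
      have e1: "(LINT u:{0..snd \<tau> m m'}|lborel. f u * fst \<tau> u m) = (LINT u:{0..snd sR m m'}|lborel. f u * fst \<tau> u m)"
        unfolding mL True s1 by (rule JL[OF x])
      show ?thesis unfolding Fm_def e1 by (rule refl)
    next
      case False
      hence "m' = mR" using mm by auto
      hence "snd \<tau> m m' = snd sR m m'" using mL r2 ne by (simp add: snd_sR)
      thus ?thesis by simp
    qed
  next
    case False
    hence m: "m = mR" using mm by auto
    have s1: "snd sR mR m' = 0" using ne by (simp add: snd_sR)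
    have e1: "(LINT u:{0..snd \<tau> m m'}|lborel. f u * fst \<tau> u m) = (LINT u:{0..snd sR m m'}|lborel. f u * fst \<tau> u m)"
      unfolding m s1 JR[OF r3] by (rule JR[symmetric]) simp
    show ?thesis unfolding Fm_def e1 by (rule refl)
  qed
  show ?thesis unfolding strat_equiv_def using A B by auto
qed

lemma ess_sR: "(UNIV :: 'm set) = {mL, mR} \<Longrightarrow> evolutionarily_stable f sR"
  unfolding evolutionarily_stable_def using equil_sR ess_equivR by blast

end

theorem mainTheorem11:
  fixes f :: "real \<Rightarrow> real" and mL mR :: "'m::finite"
  assumes "mL \<noteq> mR"
    and "set_integrable lborel {0..1} f"
    and "\<forall>u\<in>{0..1}. f u > 0"
    and "(LINT u:{0..1}|lborel. f u) = 1"
  shows "neutrally_stable f (sigma_L mL mR) \<and> neutrally_stable f (sigma_R mL mR) \<and>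
         ((UNIV :: 'm set) = {mL, mR} \<longrightarrow>
            evolutionarily_stable f (sigma_L mL mR) \<and> evolutionarily_stable f (sigma_R mL mR))"
proof -
  interpret G f mL mR using assms by unfold_locales
  show ?thesis using neutral_sL neutral_sR ess_sL ess_sR by blast
qed



end
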